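(* Fix $\nu>0$ and $\Lambda\in\mathscr P_{++}$ with $\Lambda^\theta\in\mathbb{SO}_\nu$. For $\epsilon\ge0$ define the aggregator random field $h^{\epsilon,\nu,\Lambda}_{EZ}(t,\omega,u,w)=uw^\rho+\epsilon e^{\nu t}\Lambda_t(\omega)^\theta$. Fix $\epsilon_2>0$ and $0\le\epsilon_1\le\epsilon_2$. Let $U^1,U^2\in\mathscr P_+$ satisfy $U^1\le U^2\le\Lambda$. Suppose $W^1$ is a subsolution for $(h^{\epsilon_1,\nu,\Lambda}_{EZ},U^1)$ and $W^2$ is a supersolution for $(h^{\epsilon_2,\nu,\Lambda}_{EZ},U^2)$, both with values in $[0,\infty)$, and that $(W^1,W^2)$ satisfies Condition A for $(h^{\epsilon_1,\nu,\Lambda}_{EZ},U^1)$. Then $W^1_\sigma\le W^2_\sigma$ for all finite stopping times $\sigma\ge0$.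
   Context: Work on a filtered probability space $(\Omega,\mathcal F,(\mathcal F_t)_{t\ge0},\mathbb P)$ with complete continuous filtration and trivial $\mathcal F_0$. $\mathscr P$ denotes progressively measurable processes, $\mathscr P_+$ (resp. $\mathscr P_{++}$) nonnegative (resp. strictly positive) ones. $\theta>1$ is fixed and $\rho=\frac{\theta-1}{\theta}$. For $X\in\mathscr P_+$, $J^X_t=\mathbb E[\int_t^\infty X_sds\mid\mathcal F_t]$. $\mathbb{SO}$ is the set of $X\in\mathscr P_{++}$ with $\mathbb E\int_0^\infty X_tdt<\infty$ such that $kJ^X\le X\le KJ^X$ for constants $0<k\le K<\infty$; $\mathbb{SO}_\nu$ is the set of $X\in\mathbb{SO}$ with $(e^{\nu t}X_t)_{t\ge0}\in\mathbb{SO}$. For an aggregator random field $g(t,\omega,u,w)$ with values in $[0,\infty)$ and $U\in\mathscr P_+$: $\mathbb I(g,U)=\{W\in\mathscr P:\mathbb E\int_0^\infty|g(s,\omega,U_s,W_s)|ds<\infty\}$, $\mathbb{UI}(g,U)$ its uniformly integrable elements. A $[0,\infty)$-valued optional process $W$ with right limits $W_{t+}$ is a subsolution for $(g,U)$ if $\limsup_{t\to\infty}\mathbb E[W_{t+}]\le0$ and $W_\sigma\le\mathbb E[W_{\tau+}+\int_\sigma^\tau g(s,\omega,U_s,W_s)ds\mid\mathcal F_\sigma]$ for all bounded stopping times $\sigma\le\tau$; a supersolution if $\liminf_{t\to\infty}\mathbb E[W_{t+}]\ge0$ and the reverse inequality holds for all bounded stopping times $\sigma\le\tau$. The pair $(W^1,W^2)$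 satisfies Condition A for $(g,U)$ if either $W^1$ or $W^2$ belongs to $\mathbb{UI}(g,U)$ and $(W^1-W^2)^+$ is bounded in $L^1$. *)

theory Defs
  imports "HOL-Probability.Probability"
begin

(* Setting: M is the probability space (\<Omega>, F, P); the filtration is F :: real \<Rightarrow> 'a measure,
   only times t \<ge> 0 are relevant. *)

definition std_filtration :: "'a measure \<Rightarrow> (real \<Rightarrow> 'a measure) \<Rightarrow> bool" where
  "std_filtration M F \<longleftrightarrow>
     prob_space M \<and>
     (\<forall>t\<ge>0. space (F t) = space M \<and> sets (F t) \<subseteq> sets M) \<and>
     (\<forall>s t. 0 \<le> s \<and> s \<le> t \<longrightarrow> sets (F s) \<subseteq> sets (F t)) \<and>
     \<comment> \<open>complete: F_0 contains all subsets of P-null sets\<close>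
     (\<forall>N\<in>null_sets M. \<forall>A. A \<subseteq> N \<longrightarrow> A \<in> sets (F 0)) \<and>
     \<comment> \<open>continuous: right-continuous and left-continuous\<close>
     (\<forall>t\<ge>0. sets (F t) = (\<Inter>s\<in>{t<..}. sets (F s))) \<and>
     (\<forall>t>0. sets (F t) = sets (sigma (space M) (\<Union>s\<in>{0..<t}. sets (F s)))) \<and>
     \<comment> \<open>trivial F_0\<close>
     (\<forall>A\<in>sets (F 0). measure M A = 0 \<or> measure M A = 1)"

definition progressive :: "'a measure \<Rightarrow> (real \<Rightarrow> 'a measure) \<Rightarrow> (real \<Rightarrow> 'a \<Rightarrow> real) \<Rightarrow> bool" where
  "progressive M F X \<longleftrightarrow>
     (\<forall>t\<ge>0. (\<lambda>(s, \<omega>). X s \<omega>) \<in> borel_measurable (restrict_space borel {0..t} \<Otimes>\<^sub>M F t))"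

definition progressive_nonneg :: "'a measure \<Rightarrow> (real \<Rightarrow> 'a measure) \<Rightarrow> (real \<Rightarrow> 'a \<Rightarrow> real) \<Rightarrow> bool" where
  "progressive_nonneg M F X \<longleftrightarrow> progressive M F X \<and> (\<forall>t\<ge>0. \<forall>\<omega>\<in>space M. 0 \<le> X t \<omega>)"

definition progressive_pos :: "'a measure \<Rightarrow> (real \<Rightarrow> 'a measure) \<Rightarrow> (real \<Rightarrow> 'a \<Rightarrow> real) \<Rightarrow> bool" where
  "progressive_pos M F X \<longleftrightarrow> progressive M F X \<and> (\<forall>t\<ge>0. \<forall>\<omega>\<in>space M. 0 < X t \<omega>)"

definition Jproc :: "'a measure \<Rightarrow> (real \<Rightarrow> 'a measure) \<Rightarrow> (real \<Rightarrow> 'a \<Rightarrow> real) \<Rightarrow> real \<Rightarrow> 'a \<Rightarrow> ennreal" where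
  "Jproc M F X t = nn_cond_exp M (F t) (\<lambda>\<omega>. \<integral>\<^sup>+ s\<in>{t..}. ennreal (X s \<omega>) \<partial>lborel)"

definition SO :: "'a measure \<Rightarrow> (real \<Rightarrow> 'a measure) \<Rightarrow> (real \<Rightarrow> 'a \<Rightarrow> real) \<Rightarrow> bool" where
  "SO M F X \<longleftrightarrow> progressive_pos M F X \<and>
     (\<integral>\<^sup>+ \<omega>. (\<integral>\<^sup>+ s\<in>{0..}. ennreal (X s \<omega>) \<partial>lborel) \<partial>M) < \<infinity> \<and>
     (\<exists>k K::real. 0 < k \<and> k \<le> K \<and>
        (\<forall>t\<ge>0. AE \<omega> in M. ennreal k * Jproc M F X t \<omega> \<le> ennreal (X t \<omega>)
                          \<and> ennreal (X t \<omega>) \<le> ennreal K * Jproc M F X t \<omega>))"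

definition SO_nu :: "'a measure \<Rightarrow> (real \<Rightarrow> 'a measure) \<Rightarrow> real \<Rightarrow> (real \<Rightarrow> 'a \<Rightarrow> real) \<Rightarrow> bool" where
  "SO_nu M F \<nu> X \<longleftrightarrow> SO M F X \<and> SO M F (\<lambda>t \<omega>. exp (\<nu> * t) * X t \<omega>)"

definition stopping_time_on :: "'a measure \<Rightarrow> (real \<Rightarrow> 'a measure) \<Rightarrow> ('a \<Rightarrow> real) \<Rightarrow> bool" where
  "stopping_time_on M F \<sigma> \<longleftrightarrow> (\<forall>\<omega>\<in>space M. 0 \<le> \<sigma> \<omega>) \<and>
     (\<forall>t\<ge>0. {\<omega>\<in>space M. \<sigma> \<omega> \<le> t} \<in> sets (F t))"

definition bounded_stopping_time :: "'a measure \<Rightarrow> (real \<Rightarrow> 'a measure) \<Rightarrow> ('a \<Rightarrow> real) \<Rightarrow> bool" where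
  "bounded_stopping_time M F \<sigma> \<longleftrightarrow> stopping_time_on M F \<sigma> \<and> (\<exists>C. \<forall>\<omega>\<in>space M. \<sigma> \<omega> \<le> C)"

definition stopped_sigma :: "'a measure \<Rightarrow> (real \<Rightarrow> 'a measure) \<Rightarrow> ('a \<Rightarrow> real) \<Rightarrow> 'a measure" where
  "stopped_sigma M F \<sigma> = sigma (space M)
     {A \<in> sets M. \<forall>t\<ge>0. A \<inter> {\<omega>\<in>space M. \<sigma> \<omega> \<le> t} \<in> sets (F t)}"

definition optional_sets :: "'a measure \<Rightarrow> (real \<Rightarrow> 'a measure) \<Rightarrow> (real \<times> 'a) measure" where
  "optional_sets M F = sigma ({0..} \<times> space M)
     {{(t, \<omega>). 0 \<le> t \<and> \<omega> \<in> space M \<and> \<sigma> \<omega> \<le> t} | \<sigma>. stopping_time_on M F \<sigma>}"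

definition optional :: "'a measure \<Rightarrow> (real \<Rightarrow> 'a measure) \<Rightarrow> (real \<Rightarrow> 'a \<Rightarrow> real) \<Rightarrow> bool" where
  "optional M F W \<longleftrightarrow> (\<lambda>(t, \<omega>). W t \<omega>) \<in> borel_measurable (optional_sets M F)"

definition has_right_limits :: "'a measure \<Rightarrow> (real \<Rightarrow> 'a \<Rightarrow> real) \<Rightarrow> bool" where
  "has_right_limits M W \<longleftrightarrow>
     (\<forall>\<omega>\<in>space M. \<forall>t\<ge>0. \<exists>l. ((\<lambda>s. W s \<omega>) \<longlongrightarrow> l) (at_right t))"

definition rlim :: "(real \<Rightarrow> 'a \<Rightarrow> real) \<Rightarrow> real \<Rightarrow> 'a \<Rightarrow> real" where
  "rlim W t \<omega> = Lim (at_right t) (\<lambda>s. W s \<omega>)"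

type_synonym 'a aggregator = "real \<Rightarrow> 'a \<Rightarrow> real \<Rightarrow> real \<Rightarrow> real"

definition subsolution :: "'a measure \<Rightarrow> (real \<Rightarrow> 'a measure) \<Rightarrow> 'a aggregator
     \<Rightarrow> (real \<Rightarrow> 'a \<Rightarrow> real) \<Rightarrow> (real \<Rightarrow> 'a \<Rightarrow> real) \<Rightarrow> bool" where
  "subsolution M F g U W \<longleftrightarrow>
     optional M F W \<and> has_right_limits M W \<and> (\<forall>t\<ge>0. \<forall>\<omega>\<in>space M. 0 \<le> W t \<omega>) \<and>
     Limsup at_top (\<lambda>t::real. \<integral>\<^sup>+ \<omega>. ennreal (rlim W t \<omega>) \<partial>M) \<le> 0 \<and>
     (\<forall>\<sigma> \<tau>. bounded_stopping_time M F \<sigma> \<and> bounded_stopping_time M F \<tau> \<and>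
        (\<forall>\<omega>\<in>space M. \<sigma> \<omega> \<le> \<tau> \<omega>) \<longrightarrow>
        (AE \<omega> in M. ennreal (W (\<sigma> \<omega>) \<omega>) \<le>
           nn_cond_exp M (stopped_sigma M F \<sigma>)
             (\<lambda>\<omega>. ennreal (rlim W (\<tau> \<omega>) \<omega>) +
                   (\<integral>\<^sup>+ s\<in>{\<sigma> \<omega>..\<tau> \<omega>}. ennreal (g s \<omega> (U s \<omega>) (W s \<omega>)) \<partial>lborel)) \<omega>))"

definition supersolution :: "'a measure \<Rightarrow> (real \<Rightarrow> 'a measure) \<Rightarrow> 'a aggregator
     \<Rightarrow> (real \<Rightarrow> 'a \<Rightarrow> real) \<Rightarrow> (real \<Rightarrow> 'a \<Rightarrow> real) \<Rightarrow> bool" where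
  "supersolution M F g U W \<longleftrightarrow>
     optional M F W \<and> has_right_limits M W \<and> (\<forall>t\<ge>0. \<forall>\<omega>\<in>space M. 0 \<le> W t \<omega>) \<and>
     Liminf at_top (\<lambda>t::real. \<integral>\<^sup>+ \<omega>. ennreal (rlim W t \<omega>) \<partial>M) \<ge> 0 \<and>
     (\<forall>\<sigma> \<tau>. bounded_stopping_time M F \<sigma> \<and> bounded_stopping_time M F \<tau> \<and>
        (\<forall>\<omega>\<in>space M. \<sigma> \<omega> \<le> \<tau> \<omega>) \<longrightarrow>
        (AE \<omega> in M. ennreal (W (\<sigma> \<omega>) \<omega>) \<ge>
           nn_cond_exp M (stopped_sigma M F \<sigma>)
             (\<lambda>\<omega>. ennreal (rlim W (\<tau> \<omega>) \<omega>) +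
                   (\<integral>\<^sup>+ s\<in>{\<sigma> \<omega>..\<tau> \<omega>}. ennreal (g s \<omega> (U s \<omega>) (W s \<omega>)) \<partial>lborel)) \<omega>))"

definition in_I :: "'a measure \<Rightarrow> (real \<Rightarrow> 'a measure) \<Rightarrow> 'a aggregator
     \<Rightarrow> (real \<Rightarrow> 'a \<Rightarrow> real) \<Rightarrow> (real \<Rightarrow> 'a \<Rightarrow> real) \<Rightarrow> bool" where
  "in_I M F g U W \<longleftrightarrow> progressive M F W \<and>
     (\<integral>\<^sup>+ \<omega>. (\<integral>\<^sup>+ s\<in>{0..}. ennreal \<bar>g s \<omega> (U s \<omega>) (W s \<omega>)\<bar> \<partial>lborel) \<partial>M) < \<infinity>"

definition unif_integrable_proc :: "'a measure \<Rightarrow> (real \<Rightarrow> 'a \<Rightarrow> real) \<Rightarrow> bool" where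
  "unif_integrable_proc M W \<longleftrightarrow> (\<forall>t\<ge>0. W t \<in> borel_measurable M) \<and>
     ((\<lambda>c. SUP t\<in>{0..}. \<integral>\<^sup>+ \<omega>. ennreal \<bar>W t \<omega>\<bar> * indicator {\<omega>\<in>space M. c < \<bar>W t \<omega>\<bar>} \<omega> \<partial>M)
        \<longlongrightarrow> 0) at_top"

definition in_UI :: "'a measure \<Rightarrow> (real \<Rightarrow> 'a measure) \<Rightarrow> 'a aggregator
     \<Rightarrow> (real \<Rightarrow> 'a \<Rightarrow> real) \<Rightarrow> (real \<Rightarrow> 'a \<Rightarrow> real) \<Rightarrow> bool" where
  "in_UI M F g U W \<longleftrightarrow> in_I M F g U W \<and> unif_integrable_proc M W"

definition conditionA :: "'a measure \<Rightarrow> (real \<Rightarrow> 'a measure) \<Rightarrow> 'a aggregator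
     \<Rightarrow> (real \<Rightarrow> 'a \<Rightarrow> real) \<Rightarrow> (real \<Rightarrow> 'a \<Rightarrow> real) \<Rightarrow> (real \<Rightarrow> 'a \<Rightarrow> real) \<Rightarrow> bool" where
  "conditionA M F g U W1 W2 \<longleftrightarrow>
     (in_UI M F g U W1 \<or> in_UI M F g U W2) \<and>
     (\<exists>C::real. \<forall>t\<ge>0. (\<integral>\<^sup>+ \<omega>. ennreal (max 0 (W1 t \<omega> - W2 t \<omega>)) \<partial>M) \<le> ennreal C)"

text \<open>Epstein--Zin aggregator h^{eps,nu,Lambda}_EZ with rho = (theta-1)/theta.\<close>
definition hEZ :: "real \<Rightarrow> real \<Rightarrow> real \<Rightarrow> (real \<Rightarrow> 'a \<Rightarrow> real) \<Rightarrow> 'a aggregator" where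
  "hEZ \<theta> \<epsilon> \<nu> \<Lambda> t \<omega> u w = u * w powr ((\<theta> - 1) / \<theta>) + \<epsilon> * exp (\<nu> * t) * \<Lambda> t \<omega> powr \<theta>"

end

theory Submission
  imports Defs
begin

lemma filt_facts:
  assumes "std_filtration M F"
  shows "prob_space M" "\<And>t. t \<ge> 0 \<Longrightarrow> space (F t) = space M"
    "\<And>t. t \<ge> 0 \<Longrightarrow> sets (F t) \<subseteq> sets M"
    "\<And>s t. 0 \<le> s \<Longrightarrow> s \<le> t \<Longrightarrow> sets (F s) \<subseteq> sets (F t)"
proof -
  note D = assms[unfolded std_filtration_def]
  show "prob_space M" using D by (rule conjunct1)
  have 2: "\<forall>t\<ge>0. space (F t) = space M \<and> sets (F t) \<subseteq> sets M" using D[THEN conjunct2, THEN conjunct1] .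
  show "\<And>t. t \<ge> 0 \<Longrightarrow> space (F t) = space M" using 2 by simp
  show "\<And>t. t \<ge> 0 \<Longrightarrow> sets (F t) \<subseteq> sets M" using 2 by simp
  have 3: "\<forall>s t. 0 \<le> s \<and> s \<le> t \<longrightarrow> sets (F s) \<subseteq> sets (F t)" using D[THEN conjunct2, THEN conjunct2, THEN conjunct1] .
  show "\<And>s t. 0 \<le> s \<Longrightarrow> s \<le> t \<Longrightarrow> sets (F s) \<subseteq> sets (F t)" using 3 by simp
qed
lemma stopping_facts:
  assumes "stopping_time_on M F \<sigma>"
  shows "\<And>\<omega>. \<omega> \<in> space M \<Longrightarrow> 0 \<le> \<sigma> \<omega>" "\<And>t. t \<ge> 0 \<Longrightarrow> {\<omega>\<in>space M. \<sigma> \<omega> \<le> t} \<in> sets (F t)"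
proof -
  note D = assms[unfolded stopping_time_on_def]
  show "\<And>\<omega>. \<omega> \<in> space M \<Longrightarrow> 0 \<le> \<sigma> \<omega>" using D[THEN conjunct1] by blast
  show "\<And>t. t \<ge> 0 \<Longrightarrow> {\<omega>\<in>space M. \<sigma> \<omega> \<le> t} \<in> sets (F t)" using D[THEN conjunct2] by blast
qed

lemma stopping_meas:
  assumes "std_filtration M F" "stopping_time_on M F \<sigma>"
  shows "\<sigma> \<in> borel_measurable M"
proof (subst borel_measurable_iff_le, intro allI)
  fix a :: real
  show "{w \<in> space M. \<sigma> w \<le> a} \<in> sets M"
  proof (cases "a < 0")
    case True
    have e: "{w \<in> space M. \<sigma> w \<le> a} = {}"
    proof (rule equals0I)
      fix w assume "w \<in> {w \<in> space M. \<sigma> w \<le> a}"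
      then have "w \<in> space M" "\<sigma> w \<le> a" by simp_all
      with stopping_facts(1)[OF assms(2) this(1)] True show False by simp
    qed
    show ?thesis unfolding e by (rule sets.empty_sets)
  next
    case False
    then have "{w \<in> space M. \<sigma> w \<le> a} \<in> sets (F a)" using stopping_facts(2)[OF assms(2)] by simp
    moreover have "sets (F a) \<subseteq> sets M" using filt_facts(3)[OF assms(1)] False by simp
    ultimately show ?thesis by (rule subsetD[rotated])
  qed
qed

lemma meas_into_F:
  assumes "std_filtration M F" "t \<ge> 0" "b \<in> measurable N M"
  shows "b \<in> measurable N (F t)"
proof -
  have 1: "sets (F t) \<subseteq> sets M" "space (F t) = space M" using filt_facts[OF assms(1)] assms(2) by auto
  show ?thesis unfolding measurable_def
  proof (intro CollectI conjI ballI)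
    fix y assume "y \<in> sets (F t)"
    then have "y \<in> sets M" using 1 by blast
    then show "b -` y \<inter> space N \<in> sets N" using measurable_sets[OF assms(3)] by blast
  qed (use 1 measurable_space[OF assms(3)] in auto)
qed

lemma optional_comp:
  assumes filt: "std_filtration M F" and opt: "optional M F W"
    and a: "a \<in> borel_measurable N" and b: "b \<in> measurable N M"
    and apos: "\<And>x. x \<in> space N \<Longrightarrow> 0 \<le> a x"
  shows "(\<lambda>x. W (a x) (b x)) \<in> borel_measurable N"
proof -
  have "(\<lambda>x. (a x, b x)) \<in> measurable N (optional_sets M F)"
    unfolding optional_sets_def
  proof (rule measurable_measure_of)
    show "{{(t, \<omega>). 0 \<le> t \<and> \<omega> \<in> space M \<and> \<sigma> \<omega> \<le> t} |\<sigma>. stopping_time_on M F \<sigma>} \<subseteq> Pow ({0..} \<times> space M)"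
      by auto
    show "(\<lambda>x. (a x, b x)) \<in> space N \<rightarrow> {0..} \<times> space M"
      using apos measurable_space[OF b] by auto
    fix y assume "y \<in> {{(t, \<omega>). 0 \<le> t \<and> \<omega> \<in> space M \<and> \<sigma> \<omega> \<le> t} |\<sigma>. stopping_time_on M F \<sigma>}"
    then obtain \<sigma> where st: "stopping_time_on M F \<sigma>" and y: "y = {(t, \<omega>). 0 \<le> t \<and> \<omega> \<in> space M \<and> \<sigma> \<omega> \<le> t}" by auto
    have sm[measurable]: "\<sigma> \<in> borel_measurable M" by (rule stopping_meas[OF filt st])
    have [measurable]: "a \<in> borel_measurable N" "b \<in> measurable N M" using a b by auto
    have "(\<lambda>x. (a x, b x)) -` y \<inter> space N = {x \<in> space N. \<sigma> (b x) \<le> a x}"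
      using y apos measurable_space[OF b] by auto
    also have "\<dots> \<in> sets N" by measurable
    finally show "(\<lambda>x. (a x, b x)) -` y \<inter> space N \<in> sets N" .
  qed
  from measurable_compose[OF this opt[unfolded optional_def]] show ?thesis by simp
qed

lemma progressive_comp:
  assumes filt: "std_filtration M F" and pr: "progressive M F X"
    and a: "a \<in> borel_measurable N" and b: "b \<in> measurable N M"
    and apos: "\<And>x. x \<in> space N \<Longrightarrow> 0 \<le> a x"
  shows "(\<lambda>x. X (a x) (b x)) \<in> borel_measurable N"
proof (rule borel_measurable_LIMSEQ_real)
  fix n :: nat
  have "(\<lambda>x. (min (a x) (real n), b x)) \<in> measurable N (restrict_space borel {0..real n} \<Otimes>\<^sub>M F (real n))"
  proof (rule measurable_Pair)
    show "(\<lambda>x. min (a x) (real n)) \<in> measurable N (restrict_space borel {0..real n})"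
      by (rule measurable_restrict_space2) (use apos a in auto)
    show "b \<in> measurable N (F (real n))" by (rule meas_into_F[OF filt _ b]) simp
  qed
  from measurable_compose[OF this pr[unfolded progressive_def, rule_format, of "real n"]]
  show "(\<lambda>x. X (min (a x) (real n)) (b x)) \<in> borel_measurable N" by simp
next
  fix x assume "x \<in> space N"
  obtain m :: nat where "a x \<le> real m" using real_arch_simple by blast
  then have "eventually (\<lambda>n. X (min (a x) (real n)) (b x) = X (a x) (b x)) sequentially"
    unfolding eventually_sequentially
    by (intro exI[of _ m]) (auto simp: min_def)
  then show "(\<lambda>n. X (min (a x) (real n)) (b x)) \<longlonglongrightarrow> X (a x) (b x)"
    by (rule tendsto_eventually)
qed

lemma rlim_eq:
  assumes "has_right_limits M W" "\<omega> \<in> space M" "t \<ge> 0"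
  shows "((\<lambda>s. W s \<omega>) \<longlongrightarrow> rlim W t \<omega>) (at_right t)"
proof -
  obtain l where l: "((\<lambda>s. W s \<omega>) \<longlongrightarrow> l) (at_right t)"
    using assms unfolding has_right_limits_def by blast
  then have "rlim W t \<omega> = l" unfolding rlim_def by (intro tendsto_Lim) auto
  then show ?thesis using l by simp
qed

lemma seq_at_right: "filterlim (\<lambda>n. t + 1 / real (Suc n)) (at_right t) sequentially"
proof (subst filterlim_at, intro conjI)
  show "\<forall>\<^sub>F n in sequentially. t + 1 / real (Suc n) \<in> {t<..} \<and> t + 1 / real (Suc n) \<noteq> t"
    by (intro always_eventually) auto
  have "(\<lambda>n. 1 / real (Suc n)) \<longlonglongrightarrow> 0"
    using LIMSEQ_inverse_real_of_nat by (simp add: inverse_eq_divide)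
  then show "(\<lambda>n. t + 1 / real (Suc n)) \<longlonglongrightarrow> t"
    using tendsto_add[OF tendsto_const] by fastforce
qed

lemma rlim_comp:
  assumes filt: "std_filtration M F" and opt: "optional M F W" and rl: "has_right_limits M W"
    and a: "a \<in> borel_measurable N" and b: "b \<in> measurable N M"
    and apos: "\<And>x. x \<in> space N \<Longrightarrow> 0 \<le> a x"
  shows "(\<lambda>x. rlim W (a x) (b x)) \<in> borel_measurable N"
proof (rule borel_measurable_LIMSEQ_real)
  fix n :: nat
  show "(\<lambda>x. W (a x + 1 / real (Suc n)) (b x)) \<in> borel_measurable N"
    by (rule optional_comp[OF filt opt _ b]) (use a apos in auto)
next
  fix x assume x: "x \<in> space N"
  have "b x \<in> space M" using measurable_space[OF b x] .
  from filterlim_compose[OF rlim_eq[OF rl this apos[OF x]] seq_at_right]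
  show "(\<lambda>n. W (a x + 1 / real (Suc n)) (b x)) \<longlonglongrightarrow> rlim W (a x) (b x)" by simp
qed

lemma stopped_subalg:
  assumes "std_filtration M F"
  shows "subalgebra M (stopped_sigma M F \<sigma>)"
proof -
  let ?C = "{A \<in> sets M. \<forall>t\<ge>0. A \<inter> {\<omega>\<in>space M. \<sigma> \<omega> \<le> t} \<in> sets (F t)}"
  have C: "?C \<subseteq> Pow (space M)" using sets.sets_into_space by blast
  have "sets (stopped_sigma M F \<sigma>) = sigma_sets (space M) ?C"
    unfolding stopped_sigma_def using C by (rule sets_measure_of)
  also have "\<dots> \<subseteq> sets M" by (rule sets.sigma_sets_subset) blast
  finally have "sets (stopped_sigma M F \<sigma>) \<subseteq> sets M" .
  moreover have "space (stopped_sigma M F \<sigma>) = space M"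
    unfolding stopped_sigma_def by (rule space_measure_of_conv)
  ultimately show ?thesis unfolding subalgebra_def by blast
qed

lemma stopped_sfs:
  assumes "std_filtration M F"
  shows "sigma_finite_subalgebra M (stopped_sigma M F \<sigma>)"
proof -
  interpret prob_space M using filt_facts(1)[OF assms] .
  have "finite_measure_subalgebra M (stopped_sigma M F \<sigma>)"
    unfolding finite_measure_subalgebra_def finite_measure_subalgebra_axioms_def
    using stopped_subalg[OF assms] finite_measure_axioms by blast
  then show ?thesis by (rule finite_measure_subalgebra_is_sigma_finite)
qed

lemma F_subalg:
  assumes "std_filtration M F" "t \<ge> 0"
  shows "subalgebra M (F t)"
  unfolding subalgebra_def using filt_facts(2,3)[OF assms(1) assms(2)] by simp

lemma F_sfs:
  assumes "std_filtration M F" "t \<ge> 0"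
  shows "sigma_finite_subalgebra M (F t)"
proof -
  interpret prob_space M using filt_facts(1)[OF assms(1)] .
  have "finite_measure_subalgebra M (F t)"
    unfolding finite_measure_subalgebra_def finite_measure_subalgebra_axioms_def
    using F_subalg[OF assms] finite_measure_axioms by blast
  then show ?thesis by (rule finite_measure_subalgebra_is_sigma_finite)
qed

lemma stopped_const_sets:
  assumes filt: "std_filtration M F" and t: "t \<ge> 0"
  shows "sets (stopped_sigma M F (\<lambda>_. t)) = sets (F t)"
proof -
  let ?C = "{A \<in> sets M. \<forall>s\<ge>0. A \<inter> {\<omega>\<in>space M. t \<le> s} \<in> sets (F s)}"
  have C: "?C \<subseteq> Pow (space M)" using sets.sets_into_space by blast
  have FM: "sets (F t) \<subseteq> sets M" and Fsp: "space (F t) = space M" using filt_facts[OF filt] t by auto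
  have eq: "?C = sets (F t)"
  proof (intro equalityI subsetI)
    fix A assume A: "A \<in> ?C"
    then have "A \<subseteq> space M" using sets.sets_into_space by blast
    then have e: "A \<inter> {\<omega>\<in>space M. t \<le> t} = A" by blast
    from A t have "A \<inter> {\<omega>\<in>space M. t \<le> t} \<in> sets (F t)" by blast
    then show "A \<in> sets (F t)" by (metis e)
  next
    fix A assume A: "A \<in> sets (F t)"
    have AM: "A \<in> sets M" using A FM by blast
    have Asp: "A \<subseteq> space M" using AM sets.sets_into_space by blast
    have "A \<inter> {\<omega>\<in>space M. t \<le> s} \<in> sets (F s)" if s: "s \<ge> 0" for s
    proof (cases "t \<le> s")
      case True
      then have "A \<inter> {\<omega>\<in>space M. t \<le> s} = A" using Asp by blast
      moreover have "sets (F t) \<subseteq> sets (F s)" using filt_facts(4)[OF filt t True] .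
      ultimately show ?thesis using A by (metis subsetD)
    next
      case False
      then have "A \<inter> {\<omega>\<in>space M. t \<le> s} = {}" by blast
      then show ?thesis by (metis sets.empty_sets)
    qed
    then show "A \<in> ?C" using AM by blast
  qed
  have "sets (stopped_sigma M F (\<lambda>_. t)) = sigma_sets (space M) ?C"
    unfolding stopped_sigma_def using C by (rule sets_measure_of)
  also have "\<dots> = sigma_sets (space (F t)) (sets (F t))" unfolding eq Fsp ..
  also have "\<dots> = sets (F t)" by (rule sets.sigma_sets_eq)
  finally show ?thesis .
qed

lemma nn_cond_exp_sets_cong:
  assumes "sets F1 = sets F2" "space F1 = space F2"
  shows "nn_cond_exp M F1 = nn_cond_exp M F2"
  unfolding nn_cond_exp_def subalgebra_def restr_to_subalg_def assms by (rule refl)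

lemma const_stopping:
  assumes filt: "std_filtration M F" and c: "c \<ge> 0"
  shows "bounded_stopping_time M F (\<lambda>_. c)"
  unfolding bounded_stopping_time_def stopping_time_on_def
proof (intro conjI ballI allI impI)
  fix t :: real assume t: "0 \<le> t"
  show "{\<omega> \<in> space M. c \<le> t} \<in> sets (F t)"
  proof (cases "c \<le> t")
    case True
    then have "{\<omega> \<in> space M. c \<le> t} = space (F t)" using filt_facts(2)[OF filt t] by simp
    then show ?thesis by (metis sets.top)
  next
    case False
    then have "{\<omega> \<in> space M. c \<le> t} = {}" by simp
    then show ?thesis by (metis sets.empty_sets)
  qed
qed (use c in auto)

lemma min_stopping:
  assumes filt: "std_filtration M F" and st: "stopping_time_on M F \<sigma>"
  shows "bounded_stopping_time M F (\<lambda>\<omega>. min (\<sigma> \<omega>) (real n))"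
  unfolding bounded_stopping_time_def stopping_time_on_def
proof (intro conjI ballI allI impI)
  fix \<omega> assume "\<omega> \<in> space M"
  then show "0 \<le> min (\<sigma> \<omega>) (real n)" using stopping_facts(1)[OF st] by simp
next
  fix t :: real assume t: "0 \<le> t"
  show "{\<omega> \<in> space M. min (\<sigma> \<omega>) (real n) \<le> t} \<in> sets (F t)"
  proof (cases "real n \<le> t")
    case True
    then have "{\<omega> \<in> space M. min (\<sigma> \<omega>) (real n) \<le> t} = space (F t)" using filt_facts(2)[OF filt t] by auto
    then show ?thesis by (metis sets.top)
  next
    case False
    then have "{\<omega> \<in> space M. min (\<sigma> \<omega>) (real n) \<le> t} = {\<omega> \<in> space M. \<sigma> \<omega> \<le> t}" by auto
    then show ?thesis using stopping_facts(2)[OF st t] by metis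
  qed
next
  show "\<exists>C. \<forall>\<omega>\<in>space M. min (\<sigma> \<omega>) (real n) \<le> C" by (intro exI[of _ "real n"]) simp
qed

lemma (in sigma_finite_subalgebra) nn_cond_exp_SUP:
  assumes meas[measurable]: "\<And>n. f n \<in> borel_measurable M"
    and inc: "\<And>n x. f n x \<le> f (Suc n) x"
  shows "AE x in M. (SUP n. nn_cond_exp M F (f n) x) = nn_cond_exp M F (\<lambda>x. SUP n. f n x) x"
proof (rule nn_cond_exp_charact)
  show "(\<lambda>x. SUP n. f n x) \<in> borel_measurable M" by (rule borel_measurable_SUP) (simp_all add: meas)
  show "(\<lambda>x. SUP n. nn_cond_exp M F (f n) x) \<in> borel_measurable F"
    by (rule borel_measurable_SUP) (simp_all add: borel_measurable_nn_cond_exp)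
  have mono: "AE x in M. nn_cond_exp M F (f n) x \<le> nn_cond_exp M F (f (Suc n)) x" for n
  proof -
    have "AE x in M. f n x \<le> f (Suc n) x" using inc by simp
    from nn_cond_exp_mono[OF this meas meas] show ?thesis .
  qed
  fix A assume A: "A \<in> sets F"
  then have AM: "A \<in> sets M" by (meson subalg subalgebra_def subsetD)
  have mi: "(\<lambda>x. f n x * indicator A x) \<in> borel_measurable M" for n
    by (rule borel_measurable_times_ennreal[OF meas borel_measurable_indicator[OF AM]])
  have mc: "(\<lambda>x. indicator A x * nn_cond_exp M F (f n) x) \<in> borel_measurable M" for n
    by (rule borel_measurable_times_ennreal[OF borel_measurable_indicator[OF AM] borel_measurable_nn_cond_exp2])
  have "(\<integral>\<^sup>+ x\<in>A. (SUP n. f n x) \<partial>M) = (\<integral>\<^sup>+ x. (SUP n. f n x * indicator A x) \<partial>M)"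
    by (intro nn_integral_cong) (simp split: split_indicator)
  also have "\<dots> = (SUP n. \<integral>\<^sup>+ x. f n x * indicator A x \<partial>M)"
  proof (rule nn_integral_monotone_convergence_SUP_AE)
    fix n show "AE x in M. f n x * indicator A x \<le> f (Suc n) x * indicator A x"
      by (rule AE_I2) (simp add: inc mult_right_mono)
  qed (rule mi)
  also have "\<dots> = (SUP n. \<integral>\<^sup>+ x. indicator A x * nn_cond_exp M F (f n) x \<partial>M)"
  proof (intro SUP_cong refl)
    fix n
    have "(\<integral>\<^sup>+ x. indicator A x * nn_cond_exp M F (f n) x \<partial>M) = (\<integral>\<^sup>+ x. indicator A x * f n x \<partial>M)"
      by (rule nn_cond_exp_intg[OF borel_measurable_indicator[OF A] meas])
    then show "(\<integral>\<^sup>+ x. f n x * indicator A x \<partial>M) = (\<integral>\<^sup>+ x. indicator A x * nn_cond_exp M F (f n) x \<partial>M)"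
      by (simp add: mult.commute)
  qed
  also have "\<dots> = (\<integral>\<^sup>+ x. (SUP n. indicator A x * nn_cond_exp M F (f n) x) \<partial>M)"
  proof (rule nn_integral_monotone_convergence_SUP_AE[symmetric])
    fix n show "AE x in M. indicator A x * nn_cond_exp M F (f n) x \<le> indicator A x * nn_cond_exp M F (f (Suc n)) x"
      using mono[of n] by eventually_elim (rule mult_left_mono, assumption, simp)
  qed (rule mc)
  also have "\<dots> = (\<integral>\<^sup>+ x\<in>A. (SUP n. nn_cond_exp M F (f n) x) \<partial>M)"
    by (intro nn_integral_cong) (simp split: split_indicator)
  finally show "(\<integral>\<^sup>+ x\<in>A. (SUP n. f n x) \<partial>M) = (\<integral>\<^sup>+ x\<in>A. (SUP n. nn_cond_exp M F (f n) x) \<partial>M)" .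
qed

lemma int_meas:
  fixes a b :: "'a \<Rightarrow> real" and h :: "real \<Rightarrow> 'a \<Rightarrow> real"
  assumes H: "(\<lambda>p. h (max (snd p) 0) (fst p)) \<in> borel_measurable (M \<Otimes>\<^sub>M lborel)"
    and a[measurable]: "a \<in> borel_measurable M" and b[measurable]: "b \<in> borel_measurable M"
    and apos: "\<And>\<omega>. \<omega> \<in> space M \<Longrightarrow> 0 \<le> a \<omega>"
  shows "(\<lambda>\<omega>. \<integral>\<^sup>+ s\<in>{a \<omega>..b \<omega>}. ennreal (h s \<omega>) \<partial>lborel) \<in> borel_measurable M"
proof -
  have eq: "(\<integral>\<^sup>+ s\<in>{a \<omega>..b \<omega>}. ennreal (h s \<omega>) \<partial>lborel) =
      (\<integral>\<^sup>+ s. ennreal (h (max s 0) \<omega>) * indicator {a \<omega>..b \<omega>} s \<partial>lborel)" if "\<omega> \<in> space M" for \<omega>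
  proof (intro nn_integral_cong)
    fix x
    show "ennreal (h x \<omega>) * indicator {a \<omega>..b \<omega>} x = ennreal (h (max x 0) \<omega>) * indicator {a \<omega>..b \<omega>} x"
    proof (cases "x \<in> {a \<omega>..b \<omega>}")
      case True
      then have "0 \<le> x" using apos[OF that] by auto
      then have "max x 0 = x" by (rule max_absorb1)
      then show ?thesis by simp
    next
      case False
      then show ?thesis by simp
    qed
  qed
  have [measurable]: "(\<lambda>p. ennreal (h (max (snd p) 0) (fst p))) \<in> borel_measurable (M \<Otimes>\<^sub>M lborel)"
    using H by measurable
  have "(\<lambda>(\<omega>, s). ennreal (h (max s 0) \<omega>) * indicator {a \<omega>..b \<omega>} s) \<in> borel_measurable (M \<Otimes>\<^sub>M lborel)"
  proof -
    have "(\<lambda>p. ennreal (h (max (snd p) 0) (fst p)) * (if a (fst p) \<le> snd p \<and> snd p \<le> b (fst p) then 1 else 0))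
        \<in> borel_measurable (M \<Otimes>\<^sub>M lborel)" by measurable
    then show ?thesis by (simp add: indicator_def case_prod_beta')
  qed
  then have "(\<lambda>\<omega>. \<integral>\<^sup>+ s. ennreal (h (max s 0) \<omega>) * indicator {a \<omega>..b \<omega>} s \<partial>lborel) \<in> borel_measurable M"
    by (rule lborel.borel_measurable_nn_integral)
  then show ?thesis using eq by (subst measurable_cong) auto
qed

lemma powr_bound:
  fixes w c l e :: real
  assumes th: "\<theta> > 1" and c: "c > 0" and l: "l > 0" and w: "w \<ge> c * e * l powr \<theta>" and e: "e > 0"
  shows "l * w powr ((\<theta> - 1) / \<theta> - 1) \<le> c powr (-1/\<theta>) * e powr (-1/\<theta>)"
proof -
  have ex: "(\<theta> - 1) / \<theta> - 1 = -1/\<theta>" using th by (simp add: field_simps)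
  have pos: "c * e * l powr \<theta> > 0" using c l e by simp
  have "w powr (-1/\<theta>) \<le> (c * e * l powr \<theta>) powr (-1/\<theta>)"
    by (rule powr_mono2') (use th pos w in auto)
  also have "\<dots> = c powr (-1/\<theta>) * e powr (-1/\<theta>) * (l powr \<theta>) powr (-1/\<theta>)"
    using c e l by (simp add: powr_mult)
  also have "(l powr \<theta>) powr (-1/\<theta>) = l powr (-1)" using th l by (simp add: powr_powr)
  also have "l powr (-1) = 1 / l" using l by (simp add: powr_minus_divide)
  finally have "w powr (-1/\<theta>) \<le> c powr (-1/\<theta>) * e powr (-1/\<theta>) * (1 / l)" .
  then have "l * w powr (-1/\<theta>) \<le> l * (c powr (-1/\<theta>) * e powr (-1/\<theta>) * (1 / l))"
    using l by (intro mult_left_mono) auto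
  also have "\<dots> = c powr (-1/\<theta>) * e powr (-1/\<theta>)" using l by simp
  finally show ?thesis unfolding ex .
qed

lemma key_ineq:
  fixes u1 u2 w1 w2 l c e \<epsilon>1 \<epsilon>2 :: real
  assumes th: "\<theta> > 1" and c: "c > 0" and l: "l > 0" and e: "e > 0"
    and u: "0 \<le> u1" "u1 \<le> u2" "u2 \<le> l" and w1: "0 \<le> w1" and w2: "w2 \<ge> c * e * l powr \<theta>"
    and eps: "0 \<le> \<epsilon>1" "\<epsilon>1 \<le> \<epsilon>2"
  shows "u1 * w1 powr ((\<theta> - 1) / \<theta>) + \<epsilon>1 * e * l powr \<theta>
     \<le> (u2 * w2 powr ((\<theta> - 1) / \<theta>) + \<epsilon>2 * e * l powr \<theta>) + c powr (-1/\<theta>) * e powr (-1/\<theta>) * max 0 (w1 - w2)"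
proof -
  define \<rho> where "\<rho> = (\<theta> - 1) / \<theta>"
  have rho: "0 \<le> \<rho>" "\<rho> - 1 \<le> 0" using th by (auto simp: \<rho>_def field_simps)
  have w2pos: "w2 > 0" using w2 c l e by (smt (verit) mult_pos_pos powr_gt_zero)
  have epsl: "\<epsilon>1 * e * l powr \<theta> \<le> \<epsilon>2 * e * l powr \<theta>" using eps e by (intro mult_right_mono) auto
  have B: "l * w2 powr (\<rho> - 1) \<le> c powr (-1/\<theta>) * e powr (-1/\<theta>)"
    unfolding \<rho>_def by (rule powr_bound[OF th c l w2 e])
  show ?thesis
  proof (cases "w1 \<le> w2")
    case True
    have "u1 * w1 powr \<rho> \<le> u2 * w2 powr \<rho>"
      by (intro mult_mono powr_mono2) (use u w1 rho True in auto)
    then show ?thesis using epsl True unfolding \<rho>_def by simp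
  next
    case False
    then have w12: "w2 < w1" by simp
    have w1pos: "w1 > 0" using w12 w2pos by simp
    have p1: "w1 powr \<rho> = w1 * w1 powr (\<rho> - 1)" using w1pos by (simp add: powr_mult_base)
    have p2: "w2 powr \<rho> = w2 * w2 powr (\<rho> - 1)" using w2pos by (simp add: powr_mult_base)
    have m: "w1 powr (\<rho> - 1) \<le> w2 powr (\<rho> - 1)"
      by (rule powr_mono2') (use rho w2pos w12 in auto)
    have "u1 * w1 powr \<rho> \<le> u2 * w1 powr \<rho>" using u by (intro mult_right_mono) auto
    also have "\<dots> = u2 * w1 * w1 powr (\<rho> - 1)" using p1 by simp
    also have "\<dots> \<le> u2 * w1 * w2 powr (\<rho> - 1)" using u w1 m by (intro mult_left_mono) auto
    also have "\<dots> = u2 * w2 powr \<rho> + u2 * w2 powr (\<rho> - 1) * (w1 - w2)" using p2 by (simp add: algebra_simps)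
    also have "u2 * w2 powr (\<rho> - 1) * (w1 - w2) \<le> l * w2 powr (\<rho> - 1) * (w1 - w2)"
      using u w12 by (intro mult_right_mono) auto
    also have "\<dots> \<le> c powr (-1/\<theta>) * e powr (-1/\<theta>) * (w1 - w2)"
      using B w12 by (intro mult_right_mono) auto
    finally have "u1 * w1 powr \<rho> \<le> u2 * w2 powr \<rho> + c powr (-1/\<theta>) * e powr (-1/\<theta>) * (w1 - w2)" by simp
    then show ?thesis using epsl w12 unfolding \<rho>_def by simp
  qed
qed

lemma gron_step:
  fixes f :: "real \<Rightarrow> ennreal" and \<beta> :: "real \<Rightarrow> real"
  assumes v: "0 \<le> v" and bnd: "\<And>r. r \<ge> 0 \<Longrightarrow> f r \<le> ennreal C"
    and ineq: "\<And>t. t \<ge> 0 \<Longrightarrow> f t \<le> (\<integral>\<^sup>+ r. ennreal (\<beta> r) * f r * indicator {t..} r \<partial>lborel)"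
    and Z: "Z \<in> sets borel" and zero: "\<And>r. r \<ge> v \<Longrightarrow> r \<notin> Z \<Longrightarrow> f r = 0"
    and small: "(\<integral>\<^sup>+ r. ennreal (\<beta> r) * indicator Z r \<partial>lborel) \<le> ennreal (1/2)"
    and bm: "\<beta> \<in> borel_measurable borel"
  shows "\<And>t. t \<ge> v \<Longrightarrow> f t = 0"
proof -
  define S where "S = (SUP r\<in>{v..}. f r)"
  have Sfin: "S \<le> ennreal C" unfolding S_def
    by (rule SUP_least) (use bnd v in auto)
  have fS: "f r \<le> S" if "r \<ge> v" for r unfolding S_def by (rule SUP_upper) (use that in auto)
  have main: "f t \<le> S * ennreal (1/2)" if t: "t \<ge> v" for t
  proof -
    have "f t \<le> (\<integral>\<^sup>+ r. ennreal (\<beta> r) * f r * indicator {t..} r \<partial>lborel)" using ineq t v by simp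
    also have "\<dots> \<le> (\<integral>\<^sup>+ r. S * (ennreal (\<beta> r) * indicator Z r) \<partial>lborel)"
    proof (rule nn_integral_mono)
      fix r
      show "ennreal (\<beta> r) * f r * indicator {t..} r \<le> S * (ennreal (\<beta> r) * indicator Z r)"
      proof (cases "r \<ge> t")
        case True
        then have rv: "r \<ge> v" using t by simp
        show ?thesis
        proof (cases "r \<in> Z")
          case True
          have "ennreal (\<beta> r) * f r \<le> ennreal (\<beta> r) * S" using fS[OF rv] by (rule mult_left_mono) simp
          then show ?thesis using True \<open>r \<ge> t\<close> by (simp add: mult.commute)
        next
          case False
          then show ?thesis using zero[OF rv] by simp
        qed
      next
        case False
        then show ?thesis by simp
      qed
    qed
    also have "\<dots> = S * (\<integral>\<^sup>+ r. ennreal (\<beta> r) * indicator Z r \<partial>lborel)"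
      by (rule nn_integral_cmult) (use Z bm in measurable)
    also have "\<dots> \<le> S * ennreal (1/2)" using small by (rule mult_left_mono) simp
    finally show ?thesis .
  qed
  have SS: "S \<le> S * ennreal (1/2)" unfolding S_def
    by (rule SUP_least) (use main in \<open>auto simp: S_def\<close>)
  have "S = 0"
  proof -
    obtain s where s: "S = ennreal s" "0 \<le> s" using Sfin by (cases S rule: ennreal_cases) (auto simp: top_unique)
    have eq: "ennreal (s * (1/2)) = ennreal s * ennreal (1/2)" using s(2) by (rule ennreal_mult) simp
    have "ennreal s \<le> ennreal (s * (1/2))" using SS unfolding s(1) eq[symmetric] .
    then have "s \<le> s * (1/2)" using s by (simp add: ennreal_le_iff)
    then have "s = 0" using s by simp
    then show ?thesis using s by simp
  qed
  then show "\<And>t. t \<ge> v \<Longrightarrow> f t = 0" using fS by (metis le_zero_eq)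
qed

lemma exp_tail:
  fixes a b0 t0 :: real
  assumes a: "a > 0" and b0: "b0 > 0"
  shows "(\<integral>\<^sup>+ r. ennreal (b0 * exp (-a * r)) * indicator {t0..} r \<partial>lborel) = ennreal (b0 * (exp (-a * t0) / a))"
proof (rule nn_integral_has_integral_lebesgue')
  show "\<And>x. x \<in> {t0..} \<Longrightarrow> 0 \<le> b0 * exp (- a * x)" using b0 by simp
  show "((\<lambda>x. b0 * exp (- a * x)) has_integral b0 * (exp (- a * t0) / a)) {t0..}"
    by (rule has_integral_mult_right[OF has_integral_exp_minus_to_infinity[OF a]])
qed

lemma gronwall:
  fixes f :: "real \<Rightarrow> ennreal"
  assumes a: "a > 0" and b0: "b0 > 0" and bnd: "\<And>r. r \<ge> 0 \<Longrightarrow> f r \<le> ennreal C"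
    and ineq: "\<And>t. t \<ge> 0 \<Longrightarrow> f t \<le> (\<integral>\<^sup>+ r. ennreal (b0 * exp (-a * r)) * f r * indicator {t..} r \<partial>lborel)"
  shows "\<And>t. t \<ge> 0 \<Longrightarrow> f t = 0"
proof -
  define \<beta> where "\<beta> = (\<lambda>r::real. b0 * exp (-a * r))"
  have bm: "\<beta> \<in> borel_measurable borel" unfolding \<beta>_def by measurable
  have ineq': "\<And>t. t \<ge> 0 \<Longrightarrow> f t \<le> (\<integral>\<^sup>+ r. ennreal (\<beta> r) * f r * indicator {t..} r \<partial>lborel)"
    using ineq unfolding \<beta>_def .
  define t0 where "t0 = max 0 (ln (2 * b0 / a) / a)"
  have t0: "t0 \<ge> 0" unfolding t0_def by simp
  have "exp (-a * t0) \<le> exp (- ln (2 * b0 / a))"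
  proof -
    have "ln (2 * b0 / a) / a \<le> t0" unfolding t0_def by simp
    then have "ln (2 * b0 / a) \<le> a * t0" using a by (simp add: field_simps)
    then show ?thesis by simp
  qed
  also have "exp (- ln (2 * b0 / a)) = a / (2 * b0)" using a b0 by (simp add: exp_minus)
  finally have e: "exp (-a * t0) \<le> a / (2 * b0)" .
  have "b0 * (exp (-a * t0) / a) \<le> b0 * (a / (2 * b0) / a)"
    using e a b0 by (intro mult_left_mono divide_right_mono) auto
  also have "\<dots> = 1/2" using a b0 by simp
  finally have tl: "b0 * (exp (-a * t0) / a) \<le> 1/2" .
  have G1: "\<And>t. t \<ge> t0 \<Longrightarrow> f t = 0"
  proof (rule gron_step[OF t0 bnd ineq' _ _ _ bm])
    show "{t0..} \<in> sets borel" by simp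
    show "\<And>r. t0 \<le> r \<Longrightarrow> r \<notin> {t0..} \<Longrightarrow> f r = 0" by simp
    show "(\<integral>\<^sup>+ r. ennreal (\<beta> r) * indicator {t0..} r \<partial>lborel) \<le> ennreal (1/2)"
      unfolding \<beta>_def exp_tail[OF a b0] using tl by (rule ennreal_leI)
  qed auto
  define \<delta> where "\<delta> = 1 / (2 * b0)"
  have \<delta>: "\<delta> > 0" "b0 * \<delta> = 1/2" unfolding \<delta>_def using b0 by auto
  have bb: "\<beta> r \<le> b0" if "r \<ge> 0" for r
    unfolding \<beta>_def using b0 a that by (simp add: mult_le_cancel_left1)
  have ind: "\<forall>r. r \<ge> max 0 (t0 - real n * \<delta>) \<longrightarrow> f r = 0" for n
  proof (induction n)
    case 0
    then show ?case using G1 t0 by simp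
  next
    case (Suc n)
    define v where "v = max 0 (t0 - real (Suc n) * \<delta>)"
    define u where "u = max 0 (t0 - real n * \<delta>)"
    have vu: "0 \<le> v" "v \<le> u" "u - v \<le> \<delta>" unfolding u_def v_def using \<delta> by (auto simp: algebra_simps)
    have "\<And>t. t \<ge> v \<Longrightarrow> f t = 0"
    proof (rule gron_step[OF vu(1) bnd ineq' _ _ _ bm])
      show "{v..u} \<in> sets borel" by simp
      show "f r = 0" if r: "v \<le> r" "r \<notin> {v..u}" for r
      proof -
        have "u < r" using r by auto
        then have "max 0 (t0 - real n * \<delta>) \<le> r" unfolding u_def by simp
        then show "f r = 0" using Suc.IH by blast
      qed
      have "(\<integral>\<^sup>+ r. ennreal (\<beta> r) * indicator {v..u} r \<partial>lborel) \<le> (\<integral>\<^sup>+ r. ennreal b0 * indicator {v..u} r \<partial>lborel)"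
        by (rule nn_integral_mono) (use bb vu in \<open>auto split: split_indicator intro!: ennreal_leI\<close>)
      also have "\<dots> = ennreal b0 * ennreal (u - v)" using vu by (simp add: nn_integral_cmult_indicator)
      also have "\<dots> = ennreal (b0 * (u - v))" using b0 vu by (simp add: ennreal_mult)
      also have "\<dots> \<le> ennreal (1/2)" using vu b0 \<delta> by (intro ennreal_leI) (metis mult_left_mono less_imp_le)
      finally show "(\<integral>\<^sup>+ r. ennreal (\<beta> r) * indicator {v..u} r \<partial>lborel) \<le> ennreal (1/2)" .
    qed auto
    then show ?case unfolding v_def by auto
  qed
  fix t :: real assume t: "t \<ge> 0"
  obtain n :: nat where "t0 / \<delta> \<le> real n" using real_arch_simple by blast
  then have "t0 \<le> real n * \<delta>" using \<delta> by (simp add: field_simps)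
  then have "t \<ge> max 0 (t0 - real n * \<delta>)" using t by simp
  then show "f t = 0" using ind by blast
qed

definition mx :: "(real \<Rightarrow> 'a \<Rightarrow> real) \<Rightarrow> 'a \<times> real \<Rightarrow> real" where
  "mx X = (\<lambda>p. X (max (snd p) 0) (fst p))"

lemma jm_prog:
  assumes "std_filtration M F" "progressive M F X"
  shows "mx X \<in> borel_measurable (M \<Otimes>\<^sub>M lborel)"
  unfolding mx_def
  by (rule progressive_comp[OF assms _ measurable_fst]) auto

lemma jm_opt:
  assumes "std_filtration M F" "optional M F X"
  shows "mx X \<in> borel_measurable (M \<Otimes>\<^sub>M lborel)"
  unfolding mx_def
  by (rule optional_comp[OF assms _ measurable_fst]) auto

lemma sec_meas:
  assumes H: "mx X \<in> borel_measurable (M \<Otimes>\<^sub>M lborel)" and \<omega>: "\<omega> \<in> space M"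
    and S: "S \<in> sets borel" and Sp: "\<And>r. r \<in> S \<Longrightarrow> 0 \<le> r"
  shows "(\<lambda>r. ennreal (X r \<omega>) * indicator S r) \<in> borel_measurable lborel"
proof -
  have "(\<lambda>r. mx X (\<omega>, r)) \<in> borel_measurable lborel" by (rule measurable_Pair2[OF H \<omega>])
  then have m: "(\<lambda>r. ennreal (mx X (\<omega>, r)) * indicator S r) \<in> borel_measurable lborel"
    using S by measurable
  have eq: "ennreal (mx X (\<omega>, r)) * indicator S r = ennreal (X r \<omega>) * indicator S r" for r
  proof (cases "r \<in> S")
    case True
    then have "max r 0 = r" using Sp[OF True] by (simp add: max_absorb1)
    then show ?thesis by (simp add: mx_def)
  next
    case False
    then show ?thesis by simp
  qed
  show ?thesis using m unfolding eq .
qed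

lemma jm_h:
  assumes [measurable]: "mx U \<in> borel_measurable (M \<Otimes>\<^sub>M lborel)" "mx W \<in> borel_measurable (M \<Otimes>\<^sub>M lborel)"
    "mx \<Lambda> \<in> borel_measurable (M \<Otimes>\<^sub>M lborel)"
  shows "mx (\<lambda>r \<omega>. hEZ \<theta> \<epsilon> \<nu> \<Lambda> r \<omega> (U r \<omega>) (W r \<omega>)) \<in> borel_measurable (M \<Otimes>\<^sub>M lborel)"
proof -
  have eq: "mx (\<lambda>r \<omega>. hEZ \<theta> \<epsilon> \<nu> \<Lambda> r \<omega> (U r \<omega>) (W r \<omega>)) =
     (\<lambda>p. mx U p * mx W p powr ((\<theta> - 1) / \<theta>) + \<epsilon> * exp (\<nu> * max (snd p) 0) * mx \<Lambda> p powr \<theta>)"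
    by (rule ext) (simp add: mx_def hEZ_def)
  show ?thesis unfolding eq by measurable
qed

lemma ennreal_pos_part:
  fixes x y :: real and z :: ennreal
  assumes "ennreal x \<le> ennreal y + z" "0 \<le> y"
  shows "ennreal (max 0 (x - y)) \<le> z"
proof (cases "x \<le> y")
  case True
  then show ?thesis by simp
next
  case False
  then have "ennreal x = ennreal (x - y) + ennreal y" using assms(2) by (simp add: ennreal_plus[symmetric])
  then have "ennreal y + ennreal (x - y) \<le> ennreal y + z" using assms(1) by (simp add: add.commute)
  then have "ennreal (x - y) \<le> z" unfolding ennreal_add_left_cancel_le by simp
  then show ?thesis using False by (simp add: max_def)
qed

locale setting =
  fixes M :: "'a measure" and F :: "real \<Rightarrow> 'a measure"
    and \<theta> \<nu> \<epsilon>1 \<epsilon>2 :: real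
    and \<Lambda> U1 U2 W1 W2 :: "real \<Rightarrow> 'a \<Rightarrow> real"
  assumes filt: "std_filtration M F"
    and theta: "\<theta> > 1"
    and nu: "\<nu> > 0"
    and Lam: "progressive_pos M F \<Lambda>"
    and LamSO: "SO_nu M F \<nu> (\<lambda>t \<omega>. \<Lambda> t \<omega> powr \<theta>)"
    and eps: "\<epsilon>2 > 0" "0 \<le> \<epsilon>1" "\<epsilon>1 \<le> \<epsilon>2"
    and U1: "progressive_nonneg M F U1" and U2: "progressive_nonneg M F U2"
    and U12: "\<forall>t\<ge>0. AE \<omega> in M. U1 t \<omega> \<le> U2 t \<omega> \<and> U2 t \<omega> \<le> \<Lambda> t \<omega>"
    and sub: "subsolution M F (hEZ \<theta> \<epsilon>1 \<nu> \<Lambda>) U1 W1"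
    and super: "supersolution M F (hEZ \<theta> \<epsilon>2 \<nu> \<Lambda>) U2 W2"
    and condA: "conditionA M F (hEZ \<theta> \<epsilon>1 \<nu> \<Lambda>) U1 W1 W2"
begin

lemma prob: "prob_space M" by (rule filt_facts(1)[OF filt])

lemmas sub_parts = sub[unfolded subsolution_def]
lemma opt1: "optional M F W1" by (rule sub_parts[THEN conjunct1])
lemma rl1: "has_right_limits M W1" by (rule sub_parts[THEN conjunct2, THEN conjunct1])
lemma nn1: "\<And>t \<omega>. t \<ge> 0 \<Longrightarrow> \<omega> \<in> space M \<Longrightarrow> 0 \<le> W1 t \<omega>"
  using sub_parts[THEN conjunct2, THEN conjunct2, THEN conjunct1] by simp
lemma lim1: "Limsup at_top (\<lambda>t::real. \<integral>\<^sup>+ \<omega>. ennreal (rlim W1 t \<omega>) \<partial>M) \<le> 0"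
  by (rule sub_parts[THEN conjunct2, THEN conjunct2, THEN conjunct2, THEN conjunct1])
lemmas ineq1 = sub_parts[THEN conjunct2, THEN conjunct2, THEN conjunct2, THEN conjunct2, rule_format]

lemmas super_parts = super[unfolded supersolution_def]
lemma opt2: "optional M F W2" by (rule super_parts[THEN conjunct1])
lemma rl2: "has_right_limits M W2" by (rule super_parts[THEN conjunct2, THEN conjunct1])
lemma nn2: "\<And>t \<omega>. t \<ge> 0 \<Longrightarrow> \<omega> \<in> space M \<Longrightarrow> 0 \<le> W2 t \<omega>"
  using super_parts[THEN conjunct2, THEN conjunct2, THEN conjunct1] by simp
lemmas ineq2 = super_parts[THEN conjunct2, THEN conjunct2, THEN conjunct2, THEN conjunct2, rule_format]

lemma sub_at:
  assumes "bounded_stopping_time M F \<sigma>" "bounded_stopping_time M F \<tau>" "\<And>\<omega>. \<omega> \<in> space M \<Longrightarrow> \<sigma> \<omega> \<le> \<tau> \<omega>"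
  shows "AE \<omega> in M. ennreal (W1 (\<sigma> \<omega>) \<omega>) \<le>
           nn_cond_exp M (stopped_sigma M F \<sigma>)
             (\<lambda>\<omega>. ennreal (rlim W1 (\<tau> \<omega>) \<omega>) +
                   (\<integral>\<^sup>+ s\<in>{\<sigma> \<omega>..\<tau> \<omega>}. ennreal (hEZ \<theta> \<epsilon>1 \<nu> \<Lambda> s \<omega> (U1 s \<omega>) (W1 s \<omega>)) \<partial>lborel)) \<omega>"
proof -
  have "bounded_stopping_time M F \<sigma> \<and> bounded_stopping_time M F \<tau> \<and> (\<forall>\<omega>\<in>space M. \<sigma> \<omega> \<le> \<tau> \<omega>)"
    using assms by (intro conjI ballI)
  from ineq1[OF this] show ?thesis .
qed

lemma super_at:
  assumes "bounded_stopping_time M F \<sigma>" "bounded_stopping_time M F \<tau>" "\<And>\<omega>. \<omega> \<in> space M \<Longrightarrow> \<sigma> \<omega> \<le> \<tau> \<omega>"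
  shows "AE \<omega> in M. nn_cond_exp M (stopped_sigma M F \<sigma>)
             (\<lambda>\<omega>. ennreal (rlim W2 (\<tau> \<omega>) \<omega>) +
                   (\<integral>\<^sup>+ s\<in>{\<sigma> \<omega>..\<tau> \<omega>}. ennreal (hEZ \<theta> \<epsilon>2 \<nu> \<Lambda> s \<omega> (U2 s \<omega>) (W2 s \<omega>)) \<partial>lborel)) \<omega>
          \<le> ennreal (W2 (\<sigma> \<omega>) \<omega>)"
proof -
  have "bounded_stopping_time M F \<sigma> \<and> bounded_stopping_time M F \<tau> \<and> (\<forall>\<omega>\<in>space M. \<sigma> \<omega> \<le> \<tau> \<omega>)"
    using assms by (intro conjI ballI)
  from ineq2[OF this] show ?thesis .
qed

lemma progL: "progressive M F \<Lambda>" using Lam unfolding progressive_pos_def by (rule conjunct1)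
lemma posL: "\<And>t \<omega>. t \<ge> 0 \<Longrightarrow> \<omega> \<in> space M \<Longrightarrow> 0 < \<Lambda> t \<omega>"
  using Lam unfolding progressive_pos_def by simp
lemma progU1: "progressive M F U1" using U1 unfolding progressive_nonneg_def by (rule conjunct1)
lemma progU2: "progressive M F U2" using U2 unfolding progressive_nonneg_def by (rule conjunct1)
lemma nnU1: "\<And>t \<omega>. t \<ge> 0 \<Longrightarrow> \<omega> \<in> space M \<Longrightarrow> 0 \<le> U1 t \<omega>"
  using U1 unfolding progressive_nonneg_def by simp
lemma nnU2: "\<And>t \<omega>. t \<ge> 0 \<Longrightarrow> \<omega> \<in> space M \<Longrightarrow> 0 \<le> U2 t \<omega>"
  using U2 unfolding progressive_nonneg_def by simp

lemma mL[measurable]: "mx \<Lambda> \<in> borel_measurable (M \<Otimes>\<^sub>M lborel)" by (rule jm_prog[OF filt progL])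
lemma mU1[measurable]: "mx U1 \<in> borel_measurable (M \<Otimes>\<^sub>M lborel)" by (rule jm_prog[OF filt progU1])
lemma mU2[measurable]: "mx U2 \<in> borel_measurable (M \<Otimes>\<^sub>M lborel)" by (rule jm_prog[OF filt progU2])
lemma mW1[measurable]: "mx W1 \<in> borel_measurable (M \<Otimes>\<^sub>M lborel)" by (rule jm_opt[OF filt opt1])
lemma mW2[measurable]: "mx W2 \<in> borel_measurable (M \<Otimes>\<^sub>M lborel)" by (rule jm_opt[OF filt opt2])

lemma mg1: "mx (\<lambda>r \<omega>. hEZ \<theta> \<epsilon>1 \<nu> \<Lambda> r \<omega> (U1 r \<omega>) (W1 r \<omega>)) \<in> borel_measurable (M \<Otimes>\<^sub>M lborel)"
  by (rule jm_h) (rule mU1, rule mW1, rule mL)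
lemma mg2: "mx (\<lambda>r \<omega>. hEZ \<theta> \<epsilon>2 \<nu> \<Lambda> r \<omega> (U2 r \<omega>) (W2 r \<omega>)) \<in> borel_measurable (M \<Otimes>\<^sub>M lborel)"
  by (rule jm_h) (rule mU2, rule mW2, rule mL)

definition Y where "Y = (\<lambda>t \<omega>. exp (\<nu> * t) * \<Lambda> t \<omega> powr \<theta>)"

lemma mY: "mx Y \<in> borel_measurable (M \<Otimes>\<^sub>M lborel)"
proof -
  have eq: "mx Y = (\<lambda>p. exp (\<nu> * max (snd p) 0) * mx \<Lambda> p powr \<theta>)"
    by (rule ext) (simp add: mx_def Y_def)
  show ?thesis unfolding eq by measurable
qed

lemma meas_at:
  assumes a: "a \<in> borel_measurable M" "\<And>\<omega>. \<omega> \<in> space M \<Longrightarrow> 0 \<le> a \<omega>"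
  shows "(\<lambda>\<omega>. W1 (a \<omega>) \<omega>) \<in> borel_measurable M" "(\<lambda>\<omega>. W2 (a \<omega>) \<omega>) \<in> borel_measurable M"
    "(\<lambda>\<omega>. rlim W1 (a \<omega>) \<omega>) \<in> borel_measurable M" "(\<lambda>\<omega>. rlim W2 (a \<omega>) \<omega>) \<in> borel_measurable M"
proof -
  note I = measurable_ident_sets[OF refl]
  show "(\<lambda>\<omega>. W1 (a \<omega>) \<omega>) \<in> borel_measurable M" by (rule optional_comp[OF filt opt1 a(1) I a(2)])
  show "(\<lambda>\<omega>. W2 (a \<omega>) \<omega>) \<in> borel_measurable M" by (rule optional_comp[OF filt opt2 a(1) I a(2)])
  show "(\<lambda>\<omega>. rlim W1 (a \<omega>) \<omega>) \<in> borel_measurable M" by (rule rlim_comp[OF filt opt1 rl1 a(1) I a(2)])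
  show "(\<lambda>\<omega>. rlim W2 (a \<omega>) \<omega>) \<in> borel_measurable M" by (rule rlim_comp[OF filt opt2 rl2 a(1) I a(2)])
qed

end

context setting
begin

lemma lowerJ:
  assumes s: "s \<ge> 0"
  shows "AE \<omega> in M. ennreal \<epsilon>2 * Jproc M F Y s \<omega> \<le> ennreal (W2 s \<omega>)"
proof -
  let ?G = "stopped_sigma M F (\<lambda>_. s)"
  interpret sfs: sigma_finite_subalgebra M ?G by (rule stopped_sfs[OF filt])
  define Z where "Z n \<omega> = (\<integral>\<^sup>+ r\<in>{s..s + real n}. ennreal (Y r \<omega>) \<partial>lborel)" for n \<omega>
  define X where "X n \<omega> = ennreal (rlim W2 (s + real n) \<omega>) +
     (\<integral>\<^sup>+ r\<in>{s..s + real n}. ennreal (hEZ \<theta> \<epsilon>2 \<nu> \<Lambda> r \<omega> (U2 r \<omega>) (W2 r \<omega>)) \<partial>lborel)" for n \<omega>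
  have Zm[measurable]: "Z n \<in> borel_measurable M" for n
    unfolding Z_def by (rule int_meas[OF mY[unfolded mx_def]]) (use s in auto)
  have Xm[measurable]: "X n \<in> borel_measurable M" for n
  proof -
    have "(\<lambda>\<omega>. rlim W2 (s + real n) \<omega>) \<in> borel_measurable M" by (rule meas_at(4)) (use s in auto)
    moreover have "(\<lambda>\<omega>. \<integral>\<^sup>+ r\<in>{s..s + real n}. ennreal (hEZ \<theta> \<epsilon>2 \<nu> \<Lambda> r \<omega> (U2 r \<omega>) (W2 r \<omega>)) \<partial>lborel) \<in> borel_measurable M"
      by (rule int_meas[OF mg2[unfolded mx_def]]) (use s in auto)
    ultimately show ?thesis unfolding X_def by measurable
  qed
  have sup: "AE \<omega> in M. nn_cond_exp M ?G (X n) \<omega> \<le> ennreal (W2 s \<omega>)" for n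
  proof -
    have "AE \<omega> in M. nn_cond_exp M ?G
             (\<lambda>\<omega>. ennreal (rlim W2 ((\<lambda>_. s + real n) \<omega>) \<omega>) +
                   (\<integral>\<^sup>+ r\<in>{(\<lambda>_. s) \<omega>..(\<lambda>_. s + real n) \<omega>}. ennreal (hEZ \<theta> \<epsilon>2 \<nu> \<Lambda> r \<omega> (U2 r \<omega>) (W2 r \<omega>)) \<partial>lborel)) \<omega>
          \<le> ennreal (W2 ((\<lambda>_. s) \<omega>) \<omega>)"
      by (rule super_at[OF const_stopping[OF filt s] const_stopping[OF filt]]) (use s in auto)
    then show ?thesis unfolding X_def[abs_def] by simp
  qed
  have pw: "ennreal \<epsilon>2 * Z n \<omega> \<le> X n \<omega>" if \<omega>: "\<omega> \<in> space M" for n \<omega>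
  proof -
    have "ennreal \<epsilon>2 * Z n \<omega> = (\<integral>\<^sup>+ r. ennreal \<epsilon>2 * (ennreal (Y r \<omega>) * indicator {s..s + real n} r) \<partial>lborel)"
      unfolding Z_def
      by (rule nn_integral_cmult[symmetric], rule sec_meas[OF mY \<omega>]) (use s in auto)
    also have "\<dots> \<le> (\<integral>\<^sup>+ r. ennreal (hEZ \<theta> \<epsilon>2 \<nu> \<Lambda> r \<omega> (U2 r \<omega>) (W2 r \<omega>)) * indicator {s..s + real n} r \<partial>lborel)"
    proof (rule nn_integral_mono)
      fix r
      show "ennreal \<epsilon>2 * (ennreal (Y r \<omega>) * indicator {s..s + real n} r)
         \<le> ennreal (hEZ \<theta> \<epsilon>2 \<nu> \<Lambda> r \<omega> (U2 r \<omega>) (W2 r \<omega>)) * indicator {s..s + real n} r"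
      proof (cases "r \<in> {s..s + real n}")
        case True
        then have r0: "r \<ge> 0" using s by simp
        have "0 \<le> U2 r \<omega> * W2 r \<omega> powr ((\<theta> - 1) / \<theta>)"
          using nnU2[OF r0 \<omega>] by simp
        then have le: "\<epsilon>2 * Y r \<omega> \<le> hEZ \<theta> \<epsilon>2 \<nu> \<Lambda> r \<omega> (U2 r \<omega>) (W2 r \<omega>)"
          unfolding hEZ_def Y_def by (simp add: mult.assoc)
        have "ennreal \<epsilon>2 * ennreal (Y r \<omega>) = ennreal (\<epsilon>2 * Y r \<omega>)"
          using eps(1) by (intro ennreal_mult'[symmetric]) simp
        also have "\<dots> \<le> ennreal (hEZ \<theta> \<epsilon>2 \<nu> \<Lambda> r \<omega> (U2 r \<omega>) (W2 r \<omega>))" using le by (rule ennreal_leI)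
        finally show ?thesis using True by simp
      next
        case False
        then show ?thesis by simp
      qed
    qed
    also have "\<dots> \<le> X n \<omega>" unfolding X_def by (rule add_increasing) simp_all
    finally show ?thesis .
  qed
  have m1: "AE \<omega> in M. nn_cond_exp M ?G (\<lambda>\<omega>. ennreal \<epsilon>2 * Z n \<omega>) \<omega> \<le> nn_cond_exp M ?G (X n) \<omega>" for n
    by (rule sfs.nn_cond_exp_mono) (use pw in \<open>auto intro!: AE_I2\<close>)
  have m2: "AE \<omega> in M. ennreal \<epsilon>2 * nn_cond_exp M ?G (Z n) \<omega> = nn_cond_exp M ?G (\<lambda>\<omega>. ennreal \<epsilon>2 * Z n \<omega>) \<omega>" for n
    by (rule sfs.nn_cond_exp_prod) simp_all
  have all: "AE \<omega> in M. \<forall>n. ennreal \<epsilon>2 * nn_cond_exp M ?G (Z n) \<omega> \<le> ennreal (W2 s \<omega>)"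
  proof (rule AE_all_countable[THEN iffD2], intro allI)
    fix n show "AE \<omega> in M. ennreal \<epsilon>2 * nn_cond_exp M ?G (Z n) \<omega> \<le> ennreal (W2 s \<omega>)"
      using m1[of n] m2[of n] sup[of n] by eventually_elim simp
  qed
  have Zinc: "Z n \<omega> \<le> Z (Suc n) \<omega>" for n \<omega>
    unfolding Z_def by (rule nn_integral_mono) (auto split: split_indicator)
  have sup2: "AE \<omega> in M. (SUP n. nn_cond_exp M ?G (Z n) \<omega>) = nn_cond_exp M ?G (\<lambda>\<omega>. SUP n. Z n \<omega>) \<omega>"
    by (rule sfs.nn_cond_exp_SUP[where f=Z]) (rule Zm, rule Zinc)
  have Zlim: "(SUP n. Z n \<omega>) = (\<integral>\<^sup>+ r\<in>{s..}. ennreal (Y r \<omega>) \<partial>lborel)" if \<omega>: "\<omega> \<in> space M" for \<omega>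
  proof -
    have "(SUP n. Z n \<omega>) = (\<integral>\<^sup>+ r. (SUP n. ennreal (Y r \<omega>) * indicator {s..s + real n} r) \<partial>lborel)"
      unfolding Z_def
    proof (rule nn_integral_monotone_convergence_SUP[symmetric])
      show "incseq (\<lambda>n r. ennreal (Y r \<omega>) * indicator {s..s + real n} r)"
        by (rule incseq_SucI, rule le_funI) (auto split: split_indicator)
      show "\<And>n. (\<lambda>r. ennreal (Y r \<omega>) * indicator {s..s + real n} r) \<in> borel_measurable lborel"
        by (rule sec_meas[OF mY \<omega>]) (use s in auto)
    qed
    also have "\<dots> = (\<integral>\<^sup>+ r. ennreal (Y r \<omega>) * indicator {s..} r \<partial>lborel)"
    proof (rule nn_integral_cong)
      fix r
      show "(SUP n. ennreal (Y r \<omega>) * indicator {s..s + real n} r) = ennreal (Y r \<omega>) * indicator {s..} r"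
      proof (rule antisym)
        show "(SUP n. ennreal (Y r \<omega>) * indicator {s..s + real n} r) \<le> ennreal (Y r \<omega>) * indicator {s..} r"
          by (rule SUP_least) (auto split: split_indicator)
        obtain m :: nat where m: "r - s \<le> real m" using real_arch_simple by blast
        have "ennreal (Y r \<omega>) * indicator {s..} r = ennreal (Y r \<omega>) * indicator {s..s + real m} r"
          using m by (auto split: split_indicator)
        also have "\<dots> \<le> (SUP n. ennreal (Y r \<omega>) * indicator {s..s + real n} r)"
          by (rule SUP_upper) simp
        finally show "ennreal (Y r \<omega>) * indicator {s..} r \<le> (SUP n. ennreal (Y r \<omega>) * indicator {s..s + real n} r)" .
      qed
    qed
    finally show ?thesis .
  qed
  have SZm: "(\<lambda>\<omega>. SUP n. Z n \<omega>) \<in> borel_measurable M" by measurable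
  have Jm: "(\<lambda>\<omega>. \<integral>\<^sup>+ r\<in>{s..}. ennreal (Y r \<omega>) \<partial>lborel) \<in> borel_measurable M"
    using SZm by (subst measurable_cong[OF Zlim[symmetric]])
  have cong: "AE \<omega> in M. nn_cond_exp M ?G (\<lambda>\<omega>. SUP n. Z n \<omega>) \<omega> = nn_cond_exp M ?G (\<lambda>\<omega>. \<integral>\<^sup>+ r\<in>{s..}. ennreal (Y r \<omega>) \<partial>lborel) \<omega>"
    by (rule sfs.nn_cond_exp_cong[OF AE_I2[OF Zlim] SZm Jm])
  have GF: "nn_cond_exp M ?G = nn_cond_exp M (F s)"
  proof (rule nn_cond_exp_sets_cong)
    show "sets ?G = sets (F s)" by (rule stopped_const_sets[OF filt s])
    have "space ?G = space M" unfolding stopped_sigma_def by (rule space_measure_of_conv)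
    also have "\<dots> = space (F s)" using filt_facts(2)[OF filt s] by simp
    finally show "space ?G = space (F s)" .
  qed
  have Jeq: "Jproc M F Y s = nn_cond_exp M ?G (\<lambda>\<omega>. \<integral>\<^sup>+ r\<in>{s..}. ennreal (Y r \<omega>) \<partial>lborel)"
    unfolding Jproc_def GF ..
  show ?thesis
    using all sup2 cong
  proof eventually_elim
    case (elim \<omega>)
    have "ennreal \<epsilon>2 * Jproc M F Y s \<omega> = ennreal \<epsilon>2 * (SUP n. nn_cond_exp M ?G (Z n) \<omega>)"
      unfolding Jeq using elim(2,3) by simp
    also have "\<dots> = (SUP n. ennreal \<epsilon>2 * nn_cond_exp M ?G (Z n) \<omega>)" by (rule SUP_mult_left_ennreal)
    also have "\<dots> \<le> ennreal (W2 s \<omega>)" using elim(1) by (intro SUP_least) simp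
    finally show ?case .
  qed
qed

end

context setting
begin

lemma lowerW2: "\<exists>c0>0. \<forall>s\<ge>0. AE \<omega> in M. c0 * exp (\<nu> * s) * \<Lambda> s \<omega> powr \<theta> \<le> W2 s \<omega>"
proof -
  have SOY: "SO M F Y" using LamSO unfolding SO_nu_def Y_def by (rule conjunct2)
  have "\<exists>k K::real. 0 < k \<and> k \<le> K \<and>
        (\<forall>t\<ge>0. AE \<omega> in M. ennreal k * Jproc M F Y t \<omega> \<le> ennreal (Y t \<omega>)
                          \<and> ennreal (Y t \<omega>) \<le> ennreal K * Jproc M F Y t \<omega>)"
    using SOY unfolding SO_def by (rule conjunct2[THEN conjunct2])
  then obtain k K :: real where kK: "0 < k" "k \<le> K" and
    bd: "\<forall>t\<ge>0. AE \<omega> in M. ennreal k * Jproc M F Y t \<omega> \<le> ennreal (Y t \<omega>)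
                          \<and> ennreal (Y t \<omega>) \<le> ennreal K * Jproc M F Y t \<omega>" by blast
  have K: "K > 0" using kK by simp
  show ?thesis
  proof (intro exI[of _ "\<epsilon>2 / K"] conjI allI impI)
    show "\<epsilon>2 / K > 0" using eps(1) K by simp
    fix s :: real assume s: "s \<ge> 0"
    have bds: "AE \<omega> in M. ennreal (Y s \<omega>) \<le> ennreal K * Jproc M F Y s \<omega>"
      using bd s by auto
    show "AE \<omega> in M. \<epsilon>2 / K * exp (\<nu> * s) * \<Lambda> s \<omega> powr \<theta> \<le> W2 s \<omega>"
      using bds lowerJ[OF s] AE_space
    proof eventually_elim
      case (elim \<omega>)
      have Y0: "0 \<le> Y s \<omega>" unfolding Y_def by simp
      have W0: "0 \<le> W2 s \<omega>" using nn2[OF s elim(3)] .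
      have "ennreal (\<epsilon>2 * Y s \<omega>) = ennreal \<epsilon>2 * ennreal (Y s \<omega>)"
        using eps(1) by (intro ennreal_mult') simp
      also have "\<dots> \<le> ennreal \<epsilon>2 * (ennreal K * Jproc M F Y s \<omega>)"
        using elim(1) by (rule mult_left_mono) simp
      also have "\<dots> = ennreal K * (ennreal \<epsilon>2 * Jproc M F Y s \<omega>)" by (simp add: ac_simps)
      also have "\<dots> \<le> ennreal K * ennreal (W2 s \<omega>)" using elim(2) by (rule mult_left_mono) simp
      also have "\<dots> = ennreal (K * W2 s \<omega>)" using K by (intro ennreal_mult'[symmetric]) simp
      finally have "\<epsilon>2 * Y s \<omega> \<le> K * W2 s \<omega>" using K W0 by simp
      then have "\<epsilon>2 * Y s \<omega> / K \<le> W2 s \<omega>" using K by (simp add: field_simps)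
      then show ?case unfolding Y_def by (simp add: field_simps)
    qed
  qed
qed

lemma good_ae:
  assumes c0: "\<And>s. s \<ge> 0 \<Longrightarrow> AE \<omega> in M. c0 * exp (\<nu> * s) * \<Lambda> s \<omega> powr \<theta> \<le> W2 s \<omega>"
  shows "AE \<omega> in M. AE r in lborel. 0 \<le> r \<longrightarrow>
     (U1 r \<omega> \<le> U2 r \<omega> \<and> U2 r \<omega> \<le> \<Lambda> r \<omega> \<and> c0 * exp (\<nu> * r) * \<Lambda> r \<omega> powr \<theta> \<le> W2 r \<omega>)"
proof -
  interpret prob_space M by (rule prob)
  interpret pair_sigma_finite M lborel ..
  let ?P = "\<lambda>\<omega> r. 0 \<le> r \<longrightarrow>
     (U1 r \<omega> \<le> U2 r \<omega> \<and> U2 r \<omega> \<le> \<Lambda> r \<omega> \<and> c0 * exp (\<nu> * r) * \<Lambda> r \<omega> powr \<theta> \<le> W2 r \<omega>)"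
  have eq: "{p \<in> space (M \<Otimes>\<^sub>M lborel). ?P (fst p) (snd p)} =
     {p \<in> space (M \<Otimes>\<^sub>M lborel). 0 \<le> snd p \<longrightarrow> (mx U1 p \<le> mx U2 p \<and> mx U2 p \<le> mx \<Lambda> p \<and>
        c0 * exp (\<nu> * max (snd p) 0) * mx \<Lambda> p powr \<theta> \<le> mx W2 p)}"
  proof (rule Collect_cong)
    fix p :: "'a \<times> real"
    show "(p \<in> space (M \<Otimes>\<^sub>M lborel) \<and> ?P (fst p) (snd p)) =
      (p \<in> space (M \<Otimes>\<^sub>M lborel) \<and> (0 \<le> snd p \<longrightarrow> (mx U1 p \<le> mx U2 p \<and> mx U2 p \<le> mx \<Lambda> p \<and>
        c0 * exp (\<nu> * max (snd p) 0) * mx \<Lambda> p powr \<theta> \<le> mx W2 p)))"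
    proof (cases "0 \<le> snd p")
      case True
      then have "max (snd p) 0 = snd p" by (simp add: max_absorb1)
      then show ?thesis by (simp add: mx_def)
    next
      case False
      then show ?thesis by simp
    qed
  qed
  have meas: "{p \<in> space (M \<Otimes>\<^sub>M lborel). ?P (fst p) (snd p)} \<in> sets (M \<Otimes>\<^sub>M lborel)"
    unfolding eq by measurable
  have "AE r in lborel. AE \<omega> in M. ?P \<omega> r"
  proof (rule AE_I2)
    fix r :: real
    show "AE \<omega> in M. ?P \<omega> r"
    proof (cases "0 \<le> r")
      case True
      have u: "AE \<omega> in M. U1 r \<omega> \<le> U2 r \<omega> \<and> U2 r \<omega> \<le> \<Lambda> r \<omega>" using U12 True by blast
      show ?thesis using u c0[OF True] by eventually_elim simp
    next
      case False
      then show ?thesis by simp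
    qed
  qed
  then show ?thesis using AE_commute[OF meas] by simp
qed

end

context setting
begin

definition bf where "bf c0 r = c0 powr (-1/\<theta>) * exp (\<nu> * r) powr (-1/\<theta>)"
definition Dp where "Dp r \<omega> = max 0 (W1 r \<omega> - W2 r \<omega>)"

lemma bf_nn: "0 \<le> bf c0 r" unfolding bf_def by simp

lemma mB: "mx (\<lambda>r \<omega>. bf c0 r * Dp r \<omega>) \<in> borel_measurable (M \<Otimes>\<^sub>M lborel)"
proof -
  have eq: "mx (\<lambda>r \<omega>. bf c0 r * Dp r \<omega>) =
     (\<lambda>p. (c0 powr (-1/\<theta>) * exp (\<nu> * max (snd p) 0) powr (-1/\<theta>)) * max 0 (mx W1 p - mx W2 p))"
    by (rule ext) (simp add: mx_def bf_def Dp_def)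
  show ?thesis unfolding eq by measurable
qed

lemma main_ineq:
  assumes c0pos: "c0 > 0"
    and c0: "\<And>s. s \<ge> 0 \<Longrightarrow> AE \<omega> in M. c0 * exp (\<nu> * s) * \<Lambda> s \<omega> powr \<theta> \<le> W2 s \<omega>"
    and \<sigma>: "bounded_stopping_time M F \<sigma>" and T: "0 \<le> T" and \<sigma>T: "\<And>\<omega>. \<omega> \<in> space M \<Longrightarrow> \<sigma> \<omega> \<le> T"
  shows "(\<integral>\<^sup>+\<omega>. ennreal (Dp (\<sigma> \<omega>) \<omega>) \<partial>M) \<le> (\<integral>\<^sup>+\<omega>. ennreal (rlim W1 T \<omega>) \<partial>M) +
     (\<integral>\<^sup>+\<omega>. (\<integral>\<^sup>+ r\<in>{\<sigma> \<omega>..T}. ennreal (bf c0 r * Dp r \<omega>) \<partial>lborel) \<partial>M)"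
proof -
  have st: "stopping_time_on M F \<sigma>" using \<sigma> unfolding bounded_stopping_time_def by (rule conjunct1)
  have \<sigma>m[measurable]: "\<sigma> \<in> borel_measurable M" by (rule stopping_meas[OF filt st])
  have \<sigma>0: "\<And>\<omega>. \<omega> \<in> space M \<Longrightarrow> 0 \<le> \<sigma> \<omega>" by (rule stopping_facts(1)[OF st])
  let ?G = "stopped_sigma M F \<sigma>"
  interpret sfs: sigma_finite_subalgebra M ?G by (rule stopped_sfs[OF filt])
  define I1 where "I1 \<omega> = (\<integral>\<^sup>+ r\<in>{\<sigma> \<omega>..T}. ennreal (hEZ \<theta> \<epsilon>1 \<nu> \<Lambda> r \<omega> (U1 r \<omega>) (W1 r \<omega>)) \<partial>lborel)" for \<omega>
  define I2 where "I2 \<omega> = (\<integral>\<^sup>+ r\<in>{\<sigma> \<omega>..T}. ennreal (hEZ \<theta> \<epsilon>2 \<nu> \<Lambda> r \<omega> (U2 r \<omega>) (W2 r \<omega>)) \<partial>lborel)" for \<omega>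
  define IB where "IB \<omega> = (\<integral>\<^sup>+ r\<in>{\<sigma> \<omega>..T}. ennreal (bf c0 r * Dp r \<omega>) \<partial>lborel)" for \<omega>
  define R1 where "R1 \<omega> = ennreal (rlim W1 T \<omega>)" for \<omega>
  define R2 where "R2 \<omega> = ennreal (rlim W2 T \<omega>)" for \<omega>
  have I1m[measurable]: "I1 \<in> borel_measurable M" unfolding I1_def[abs_def]
    by (rule int_meas[OF mg1[unfolded mx_def] \<sigma>m]) (use \<sigma>0 in auto)
  have I2m[measurable]: "I2 \<in> borel_measurable M" unfolding I2_def[abs_def]
    by (rule int_meas[OF mg2[unfolded mx_def] \<sigma>m]) (use \<sigma>0 in auto)
  have IBm[measurable]: "IB \<in> borel_measurable M" unfolding IB_def[abs_def]
    by (rule int_meas[OF mB[unfolded mx_def] \<sigma>m]) (use \<sigma>0 in auto)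
  have R1m[measurable]: "R1 \<in> borel_measurable M" unfolding R1_def[abs_def]
    using meas_at(3)[of "\<lambda>_. T"] T by measurable
  have R2m[measurable]: "R2 \<in> borel_measurable M" unfolding R2_def[abs_def]
    using meas_at(4)[of "\<lambda>_. T"] T by measurable
  have a: "AE \<omega> in M. ennreal (W1 (\<sigma> \<omega>) \<omega>) \<le> nn_cond_exp M ?G (\<lambda>\<omega>. R1 \<omega> + I1 \<omega>) \<omega>"
    using sub_at[OF \<sigma> const_stopping[OF filt T] \<sigma>T] unfolding R1_def I1_def by simp
  have b: "AE \<omega> in M. nn_cond_exp M ?G (\<lambda>\<omega>. R2 \<omega> + I2 \<omega>) \<omega> \<le> ennreal (W2 (\<sigma> \<omega>) \<omega>)"
    using super_at[OF \<sigma> const_stopping[OF filt T] \<sigma>T] unfolding R2_def I2_def by simp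
  have gae: "AE \<omega> in M. AE r in lborel. 0 \<le> r \<longrightarrow>
     (U1 r \<omega> \<le> U2 r \<omega> \<and> U2 r \<omega> \<le> \<Lambda> r \<omega> \<and> c0 * exp (\<nu> * r) * \<Lambda> r \<omega> powr \<theta> \<le> W2 r \<omega>)"
    by (rule good_ae) (rule c0)
  have c: "AE \<omega> in M. R1 \<omega> + I1 \<omega> \<le> (R2 \<omega> + I2 \<omega>) + (R1 \<omega> + IB \<omega>)"
    using gae AE_space
  proof eventually_elim
    case (elim \<omega>)
    have \<omega>: "\<omega> \<in> space M" by (rule elim(2))
    have "I1 \<omega> \<le> (\<integral>\<^sup>+ r. ennreal (hEZ \<theta> \<epsilon>2 \<nu> \<Lambda> r \<omega> (U2 r \<omega>) (W2 r \<omega>)) * indicator {\<sigma> \<omega>..T} r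
                     + ennreal (bf c0 r * Dp r \<omega>) * indicator {\<sigma> \<omega>..T} r \<partial>lborel)"
      unfolding I1_def
    proof (rule nn_integral_mono_AE)
      show "AE r in lborel. ennreal (hEZ \<theta> \<epsilon>1 \<nu> \<Lambda> r \<omega> (U1 r \<omega>) (W1 r \<omega>)) * indicator {\<sigma> \<omega>..T} r
         \<le> ennreal (hEZ \<theta> \<epsilon>2 \<nu> \<Lambda> r \<omega> (U2 r \<omega>) (W2 r \<omega>)) * indicator {\<sigma> \<omega>..T} r
                     + ennreal (bf c0 r * Dp r \<omega>) * indicator {\<sigma> \<omega>..T} r"
        using elim(1)
      proof eventually_elim
        case (elim r)
        show ?case
        proof (cases "r \<in> {\<sigma> \<omega>..T}")
          case True
          then have r0: "0 \<le> r" using \<sigma>0[OF \<omega>] by simp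
          then have gd: "U1 r \<omega> \<le> U2 r \<omega>" "U2 r \<omega> \<le> \<Lambda> r \<omega>" "c0 * exp (\<nu> * r) * \<Lambda> r \<omega> powr \<theta> \<le> W2 r \<omega>"
            using elim by auto
          have ki: "hEZ \<theta> \<epsilon>1 \<nu> \<Lambda> r \<omega> (U1 r \<omega>) (W1 r \<omega>) \<le>
              hEZ \<theta> \<epsilon>2 \<nu> \<Lambda> r \<omega> (U2 r \<omega>) (W2 r \<omega>) + bf c0 r * Dp r \<omega>"
            unfolding hEZ_def bf_def Dp_def
            by (rule key_ineq[OF theta c0pos posL[OF r0 \<omega>] exp_gt_zero nnU1[OF r0 \<omega>] gd(1) gd(2) nn1[OF r0 \<omega>] gd(3) eps(2) eps(3)])
          have g2: "0 \<le> hEZ \<theta> \<epsilon>2 \<nu> \<Lambda> r \<omega> (U2 r \<omega>) (W2 r \<omega>)"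
            unfolding hEZ_def using nnU2[OF r0 \<omega>] eps by simp
          have bd: "0 \<le> bf c0 r * Dp r \<omega>" using bf_nn[of c0 r] by (simp add: Dp_def)
          have "ennreal (hEZ \<theta> \<epsilon>1 \<nu> \<Lambda> r \<omega> (U1 r \<omega>) (W1 r \<omega>)) \<le>
              ennreal (hEZ \<theta> \<epsilon>2 \<nu> \<Lambda> r \<omega> (U2 r \<omega>) (W2 r \<omega>) + bf c0 r * Dp r \<omega>)"
            using ki by (rule ennreal_leI)
          also have "\<dots> = ennreal (hEZ \<theta> \<epsilon>2 \<nu> \<Lambda> r \<omega> (U2 r \<omega>) (W2 r \<omega>)) + ennreal (bf c0 r * Dp r \<omega>)"
            using g2 bd by (rule ennreal_plus)
          finally show ?thesis using True by simp
        next
          case False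
          then show ?thesis by simp
        qed
      qed
    qed
    also have "\<dots> = I2 \<omega> + IB \<omega>"
      unfolding I2_def IB_def
    proof (rule nn_integral_add)
      show "(\<lambda>r. ennreal (hEZ \<theta> \<epsilon>2 \<nu> \<Lambda> r \<omega> (U2 r \<omega>) (W2 r \<omega>)) * indicator {\<sigma> \<omega>..T} r) \<in> borel_measurable lborel"
        by (rule sec_meas[OF mg2 \<omega>]) (use \<sigma>0[OF \<omega>] in auto)
      show "(\<lambda>r. ennreal (bf c0 r * Dp r \<omega>) * indicator {\<sigma> \<omega>..T} r) \<in> borel_measurable lborel"
        by (rule sec_meas[OF mB \<omega>]) (use \<sigma>0[OF \<omega>] in auto)
    qed
    finally have "I1 \<omega> \<le> I2 \<omega> + IB \<omega>" .
    then have "R1 \<omega> + I1 \<omega> \<le> R1 \<omega> + (I2 \<omega> + IB \<omega>)" by (rule add_left_mono)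
    also have "\<dots> = I2 \<omega> + (R1 \<omega> + IB \<omega>)" by (simp add: ac_simps)
    also have "\<dots> \<le> (R2 \<omega> + I2 \<omega>) + (R1 \<omega> + IB \<omega>)" by (intro add_right_mono add_increasing) simp_all
    finally show ?case .
  qed
  have d: "AE \<omega> in M. nn_cond_exp M ?G (\<lambda>\<omega>. R1 \<omega> + I1 \<omega>) \<omega> \<le> nn_cond_exp M ?G (\<lambda>\<omega>. (R2 \<omega> + I2 \<omega>) + (R1 \<omega> + IB \<omega>)) \<omega>"
    by (rule sfs.nn_cond_exp_mono[OF c]) measurable
  have e: "AE \<omega> in M. nn_cond_exp M ?G (\<lambda>\<omega>. R2 \<omega> + I2 \<omega>) \<omega> + nn_cond_exp M ?G (\<lambda>\<omega>. R1 \<omega> + IB \<omega>) \<omega>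
      = nn_cond_exp M ?G (\<lambda>\<omega>. (R2 \<omega> + I2 \<omega>) + (R1 \<omega> + IB \<omega>)) \<omega>"
    by (rule sfs.nn_cond_exp_sum) measurable
  have f: "AE \<omega> in M. ennreal (Dp (\<sigma> \<omega>) \<omega>) \<le> nn_cond_exp M ?G (\<lambda>\<omega>. R1 \<omega> + IB \<omega>) \<omega>"
    using a b d e AE_space
  proof eventually_elim
    case (elim \<omega>)
    note elim(1)
    also note elim(3)
    also note elim(4)[symmetric]
    also have "nn_cond_exp M ?G (\<lambda>\<omega>. R2 \<omega> + I2 \<omega>) \<omega> + nn_cond_exp M ?G (\<lambda>\<omega>. R1 \<omega> + IB \<omega>) \<omega>
        \<le> ennreal (W2 (\<sigma> \<omega>) \<omega>) + nn_cond_exp M ?G (\<lambda>\<omega>. R1 \<omega> + IB \<omega>) \<omega>"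
      using elim(2) by (rule add_right_mono)
    finally have "ennreal (W1 (\<sigma> \<omega>) \<omega>) \<le> ennreal (W2 (\<sigma> \<omega>) \<omega>) + nn_cond_exp M ?G (\<lambda>\<omega>. R1 \<omega> + IB \<omega>) \<omega>" .
    then show ?case unfolding Dp_def by (rule ennreal_pos_part) (rule nn2[OF \<sigma>0[OF elim(5)] elim(5)])
  qed
  have "(\<integral>\<^sup>+\<omega>. ennreal (Dp (\<sigma> \<omega>) \<omega>) \<partial>M) \<le> (\<integral>\<^sup>+\<omega>. nn_cond_exp M ?G (\<lambda>\<omega>. R1 \<omega> + IB \<omega>) \<omega> \<partial>M)"
    by (rule nn_integral_mono_AE[OF f])
  also have "\<dots> = (\<integral>\<^sup>+\<omega>. R1 \<omega> + IB \<omega> \<partial>M)"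
    using sfs.nn_cond_exp_intg[of "\<lambda>_. 1" "\<lambda>\<omega>. R1 \<omega> + IB \<omega>"] by simp
  also have "\<dots> = (\<integral>\<^sup>+\<omega>. R1 \<omega> \<partial>M) + (\<integral>\<^sup>+\<omega>. IB \<omega> \<partial>M)"
    by (rule nn_integral_add) measurable
  finally show ?thesis unfolding R1_def IB_def .
qed

end

context setting
begin

definition fD where "fD r = (\<integral>\<^sup>+\<omega>. ennreal (Dp r \<omega>) \<partial>M)"

lemma Dp_meas: "r \<ge> 0 \<Longrightarrow> (\<lambda>\<omega>. ennreal (Dp r \<omega>)) \<in> borel_measurable M"
  unfolding Dp_def using meas_at(1,2)[of "\<lambda>_. r"] by measurable

lemma tonelli:
  assumes a: "0 \<le> a"
  shows "(\<integral>\<^sup>+\<omega>. (\<integral>\<^sup>+ r\<in>{a..b}. ennreal (bf cc r * Dp r \<omega>) \<partial>lborel) \<partial>M)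
     = (\<integral>\<^sup>+ r. ennreal (bf cc r) * fD r * indicator {a..b} r \<partial>lborel)"
proof -
  interpret prob_space M by (rule prob)
  interpret pair_sigma_finite M lborel ..
  define H where "H \<omega> r = ennreal (mx (\<lambda>r \<omega>. bf cc r * Dp r \<omega>) (\<omega>, r)) * indicator {a..b} r" for \<omega> r
  have Hm: "case_prod H \<in> borel_measurable (M \<Otimes>\<^sub>M lborel)"
  proof -
    have "(\<lambda>p. ennreal (mx (\<lambda>r \<omega>. bf cc r * Dp r \<omega>) p) * indicator {a..b} (snd p)) \<in> borel_measurable (M \<Otimes>\<^sub>M lborel)"
      using mB[of cc] by measurable
    then show ?thesis unfolding H_def by (simp add: case_prod_beta')
  qed
  have eq1: "(\<integral>\<^sup>+ r\<in>{a..b}. ennreal (bf cc r * Dp r \<omega>) \<partial>lborel) = (\<integral>\<^sup>+ r. H \<omega> r \<partial>lborel)" for \<omega>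
  proof (rule nn_integral_cong)
    fix r show "ennreal (bf cc r * Dp r \<omega>) * indicator {a..b} r = H \<omega> r"
    proof (cases "r \<in> {a..b}")
      case True
      then have "max r 0 = r" using a by (simp add: max_absorb1)
      then show ?thesis using True unfolding H_def by (simp add: mx_def)
    next
      case False
      then show ?thesis unfolding H_def by simp
    qed
  qed
  have eq2: "(\<integral>\<^sup>+\<omega>. H \<omega> r \<partial>M) = ennreal (bf cc r) * fD r * indicator {a..b} r" for r
  proof (cases "r \<in> {a..b}")
    case True
    then have r0: "0 \<le> r" and mr: "max r 0 = r" using a by (auto simp: max_absorb1)
    have "(\<integral>\<^sup>+\<omega>. H \<omega> r \<partial>M) = (\<integral>\<^sup>+\<omega>. ennreal (bf cc r) * ennreal (Dp r \<omega>) \<partial>M)"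
    proof (rule nn_integral_cong)
      fix \<omega> show "H \<omega> r = ennreal (bf cc r) * ennreal (Dp r \<omega>)"
        unfolding H_def using True mr bf_nn[of cc r] by (simp add: mx_def ennreal_mult')
    qed
    also have "\<dots> = ennreal (bf cc r) * fD r" unfolding fD_def
      by (rule nn_integral_cmult) (rule Dp_meas[OF r0])
    finally show ?thesis using True by simp
  next
    case False
    then show ?thesis unfolding H_def by simp
  qed
  have "(\<integral>\<^sup>+\<omega>. (\<integral>\<^sup>+ r\<in>{a..b}. ennreal (bf cc r * Dp r \<omega>) \<partial>lborel) \<partial>M) = (\<integral>\<^sup>+\<omega>. (\<integral>\<^sup>+ r. H \<omega> r \<partial>lborel) \<partial>M)"
    unfolding eq1 ..
  also have "\<dots> = (\<integral>\<^sup>+ r. (\<integral>\<^sup>+\<omega>. H \<omega> r \<partial>M) \<partial>lborel)" by (rule Fubini'[OF Hm, symmetric])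
  also have "\<dots> = (\<integral>\<^sup>+ r. ennreal (bf cc r) * fD r * indicator {a..b} r \<partial>lborel)" unfolding eq2 ..
  finally show ?thesis .
qed

lemma small_rlim:
  assumes e: "e > 0"
  shows "\<exists>N. \<forall>T\<ge>N. (\<integral>\<^sup>+\<omega>. ennreal (rlim W1 T \<omega>) \<partial>M) < ennreal e"
proof -
  have "Limsup at_top (\<lambda>t::real. \<integral>\<^sup>+ \<omega>. ennreal (rlim W1 t \<omega>) \<partial>M) < ennreal e"
    using lim1 e by (simp add: le_less_trans)
  then have "eventually (\<lambda>T. (\<integral>\<^sup>+\<omega>. ennreal (rlim W1 T \<omega>) \<partial>M) < ennreal e) at_top"
    by (rule Limsup_lessD)
  then show ?thesis unfolding eventually_at_top_linorder .
qed

lemma fD_ineq: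
  assumes c0pos: "c0 > 0"
    and c0: "\<And>s. s \<ge> 0 \<Longrightarrow> AE \<omega> in M. c0 * exp (\<nu> * s) * \<Lambda> s \<omega> powr \<theta> \<le> W2 s \<omega>"
    and t: "t \<ge> 0"
  shows "fD t \<le> (\<integral>\<^sup>+ r. ennreal (bf c0 r) * fD r * indicator {t..} r \<partial>lborel)"
proof (rule ennreal_le_epsilon)
  fix e :: real assume e: "0 < e"
  obtain N where N: "\<And>T. T \<ge> N \<Longrightarrow> (\<integral>\<^sup>+\<omega>. ennreal (rlim W1 T \<omega>) \<partial>M) < ennreal e"
    using small_rlim[OF e] by blast
  define T where "T = max N t"
  have T: "T \<ge> 0" "t \<le> T" "T \<ge> N" unfolding T_def using t by auto
  have "fD t = (\<integral>\<^sup>+\<omega>. ennreal (Dp ((\<lambda>_. t) \<omega>) \<omega>) \<partial>M)" unfolding fD_def by simp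
  also have "\<dots> \<le> (\<integral>\<^sup>+\<omega>. ennreal (rlim W1 T \<omega>) \<partial>M) +
     (\<integral>\<^sup>+\<omega>. (\<integral>\<^sup>+ r\<in>{(\<lambda>_. t) \<omega>..T}. ennreal (bf c0 r * Dp r \<omega>) \<partial>lborel) \<partial>M)"
    by (rule main_ineq[OF c0pos c0 const_stopping[OF filt t] T(1)]) (use T in auto)
  also have "(\<integral>\<^sup>+\<omega>. (\<integral>\<^sup>+ r\<in>{(\<lambda>_. t) \<omega>..T}. ennreal (bf c0 r * Dp r \<omega>) \<partial>lborel) \<partial>M)
      = (\<integral>\<^sup>+ r. ennreal (bf c0 r) * fD r * indicator {t..T} r \<partial>lborel)"
    using tonelli[OF t, where b=T and cc=c0] by simp
  also have "\<dots> \<le> (\<integral>\<^sup>+ r. ennreal (bf c0 r) * fD r * indicator {t..} r \<partial>lborel)"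
    by (rule nn_integral_mono) (auto split: split_indicator)
  also have "(\<integral>\<^sup>+\<omega>. ennreal (rlim W1 T \<omega>) \<partial>M) \<le> ennreal e" using N[OF T(3)] by simp
  finally show "fD t \<le> (\<integral>\<^sup>+ r. ennreal (bf c0 r) * fD r * indicator {t..} r \<partial>lborel) + ennreal e"
    by (simp add: add.commute add_right_mono)
qed

end

context setting
begin

lemma fD_zero:
  assumes c0pos: "c0 > 0"
    and c0: "\<And>s. s \<ge> 0 \<Longrightarrow> AE \<omega> in M. c0 * exp (\<nu> * s) * \<Lambda> s \<omega> powr \<theta> \<le> W2 s \<omega>"
  shows "\<And>r. r \<ge> 0 \<Longrightarrow> fD r = 0"
proof -
  have "\<exists>C::real. \<forall>t\<ge>0. (\<integral>\<^sup>+ \<omega>. ennreal (max 0 (W1 t \<omega> - W2 t \<omega>)) \<partial>M) \<le> ennreal C"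
    using condA unfolding conditionA_def by (rule conjunct2)
  then obtain C :: real where C: "\<forall>t\<ge>0. (\<integral>\<^sup>+ \<omega>. ennreal (max 0 (W1 t \<omega> - W2 t \<omega>)) \<partial>M) \<le> ennreal C"
    by (rule exE)
  have bnd: "\<And>r. r \<ge> 0 \<Longrightarrow> fD r \<le> ennreal C" unfolding fD_def Dp_def using C by simp
  have bfe: "bf c0 r = c0 powr (-1/\<theta>) * exp (- (\<nu> / \<theta>) * r)" for r
    unfolding bf_def exp_powr_real by (simp add: field_simps)
  have a: "\<nu> / \<theta> > 0" using nu theta by simp
  have b0: "c0 powr (-1/\<theta>) > 0" using c0pos by simp
  have ineq: "\<And>t. t \<ge> 0 \<Longrightarrow> fD t \<le> (\<integral>\<^sup>+ r. ennreal (c0 powr (-1/\<theta>) * exp (- (\<nu> / \<theta>) * r)) * fD r * indicator {t..} r \<partial>lborel)"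
    using fD_ineq[OF c0pos c0] unfolding bfe .
  show "\<And>r. r \<ge> 0 \<Longrightarrow> fD r = 0" by (rule gronwall[OF a b0 bnd ineq])
qed

lemma final:
  assumes st: "stopping_time_on M F \<sigma>"
  shows "AE \<omega> in M. W1 (\<sigma> \<omega>) \<omega> \<le> W2 (\<sigma> \<omega>) \<omega>"
proof -
  obtain c0 where c0pos: "c0 > 0" and c0: "\<And>s. s \<ge> 0 \<Longrightarrow> AE \<omega> in M. c0 * exp (\<nu> * s) * \<Lambda> s \<omega> powr \<theta> \<le> W2 s \<omega>"
    using lowerW2 by blast
  have fz: "\<And>r. r \<ge> 0 \<Longrightarrow> fD r = 0" by (rule fD_zero[OF c0pos c0])
  have \<sigma>m[measurable]: "\<sigma> \<in> borel_measurable M" by (rule stopping_meas[OF filt st])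
  have \<sigma>0: "\<And>\<omega>. \<omega> \<in> space M \<Longrightarrow> 0 \<le> \<sigma> \<omega>" by (rule stopping_facts(1)[OF st])
  have zn: "AE \<omega> in M. Dp (min (\<sigma> \<omega>) (real n)) \<omega> = 0" for n
  proof -
    let ?\<sigma> = "\<lambda>\<omega>. min (\<sigma> \<omega>) (real n)"
    have bst: "bounded_stopping_time M F ?\<sigma>" by (rule min_stopping[OF filt st])
    have \<sigma>n0: "\<And>\<omega>. \<omega> \<in> space M \<Longrightarrow> 0 \<le> ?\<sigma> \<omega>" using \<sigma>0 by simp
    have "(\<integral>\<^sup>+\<omega>. ennreal (Dp (?\<sigma> \<omega>) \<omega>) \<partial>M) \<le> 0"
    proof (rule ennreal_le_epsilon)
      fix e :: real assume e: "0 < e"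
      obtain N where N: "\<And>T. T \<ge> N \<Longrightarrow> (\<integral>\<^sup>+\<omega>. ennreal (rlim W1 T \<omega>) \<partial>M) < ennreal e"
        using small_rlim[OF e] by blast
      define T where "T = max N (real n)"
      have T: "T \<ge> 0" "real n \<le> T" "T \<ge> N" unfolding T_def by auto
      have "(\<integral>\<^sup>+\<omega>. ennreal (Dp (?\<sigma> \<omega>) \<omega>) \<partial>M) \<le> (\<integral>\<^sup>+\<omega>. ennreal (rlim W1 T \<omega>) \<partial>M) +
         (\<integral>\<^sup>+\<omega>. (\<integral>\<^sup>+ r\<in>{?\<sigma> \<omega>..T}. ennreal (bf c0 r * Dp r \<omega>) \<partial>lborel) \<partial>M)"
        by (rule main_ineq[OF c0pos c0 bst T(1)]) (use T in auto)
      also have "(\<integral>\<^sup>+\<omega>. (\<integral>\<^sup>+ r\<in>{?\<sigma> \<omega>..T}. ennreal (bf c0 r * Dp r \<omega>) \<partial>lborel) \<partial>M)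
          \<le> (\<integral>\<^sup>+\<omega>. (\<integral>\<^sup>+ r\<in>{0..T}. ennreal (bf c0 r * Dp r \<omega>) \<partial>lborel) \<partial>M)"
      proof (rule nn_integral_mono)
        fix \<omega> assume \<omega>: "\<omega> \<in> space M"
        show "(\<integral>\<^sup>+ r\<in>{?\<sigma> \<omega>..T}. ennreal (bf c0 r * Dp r \<omega>) \<partial>lborel) \<le> (\<integral>\<^sup>+ r\<in>{0..T}. ennreal (bf c0 r * Dp r \<omega>) \<partial>lborel)"
          using \<sigma>n0[OF \<omega>] by (intro nn_integral_mono) (auto split: split_indicator)
      qed
      also have "(\<integral>\<^sup>+\<omega>. (\<integral>\<^sup>+ r\<in>{0..T}. ennreal (bf c0 r * Dp r \<omega>) \<partial>lborel) \<partial>M)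
          = (\<integral>\<^sup>+ r. ennreal (bf c0 r) * fD r * indicator {0..T} r \<partial>lborel)"
        by (rule tonelli) simp
      also have "\<dots> = 0"
      proof -
        have "(\<lambda>r. ennreal (bf c0 r) * fD r * indicator {0..T} r) = (\<lambda>r. 0)"
          by (rule ext) (auto split: split_indicator simp: fz)
        then show ?thesis by simp
      qed
      also have "(\<integral>\<^sup>+\<omega>. ennreal (rlim W1 T \<omega>) \<partial>M) \<le> ennreal e" using N[OF T(3)] by simp
      finally show "(\<integral>\<^sup>+\<omega>. ennreal (Dp (?\<sigma> \<omega>) \<omega>) \<partial>M) \<le> 0 + ennreal e" by simp
    qed
    then have int0: "(\<integral>\<^sup>+\<omega>. ennreal (Dp (?\<sigma> \<omega>) \<omega>) \<partial>M) = 0" by simp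
    have meas: "(\<lambda>\<omega>. ennreal (Dp (?\<sigma> \<omega>) \<omega>)) \<in> borel_measurable M"
    proof -
      have m: "?\<sigma> \<in> borel_measurable M" by measurable
      show ?thesis unfolding Dp_def using meas_at(1,2)[OF m \<sigma>n0] by measurable
    qed
    have "AE \<omega> in M. ennreal (Dp (?\<sigma> \<omega>) \<omega>) = 0" using int0 nn_integral_0_iff_AE[OF meas] by simp
    then show ?thesis by eventually_elim (auto simp add: Dp_def ennreal_eq_0_iff max_def split: if_splits)
  qed
  have "AE \<omega> in M. \<forall>n. Dp (min (\<sigma> \<omega>) (real n)) \<omega> = 0"
    by (rule AE_all_countable[THEN iffD2]) (rule allI, rule zn)
  then show ?thesis
  proof eventually_elim
    case (elim \<omega>)
    obtain n :: nat where "\<sigma> \<omega> \<le> real n" using real_arch_simple by blast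
    then have "min (\<sigma> \<omega>) (real n) = \<sigma> \<omega>" by simp
    with elim have "Dp (\<sigma> \<omega>) \<omega> = 0" by metis
    then show ?case unfolding Dp_def by simp
  qed
qed

end

theorem corollary6p3:
  fixes M :: "'a measure" and F :: "real \<Rightarrow> 'a measure"
    and \<theta> \<nu> \<epsilon>1 \<epsilon>2 :: real
    and \<Lambda> U1 U2 W1 W2 :: "real \<Rightarrow> 'a \<Rightarrow> real"
    and \<sigma> :: "'a \<Rightarrow> real"
  assumes filt: "std_filtration M F"
    and theta: "\<theta> > 1"
    and nu: "\<nu> > 0"
    and Lam: "progressive_pos M F \<Lambda>"
    and LamSO: "SO_nu M F \<nu> (\<lambda>t \<omega>. \<Lambda> t \<omega> powr \<theta>)"
    and eps: "\<epsilon>2 > 0" "0 \<le> \<epsilon>1" "\<epsilon>1 \<le> \<epsilon>2"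
    and U1: "progressive_nonneg M F U1" and U2: "progressive_nonneg M F U2"
    and U12: "\<forall>t\<ge>0. AE \<omega> in M. U1 t \<omega> \<le> U2 t \<omega> \<and> U2 t \<omega> \<le> \<Lambda> t \<omega>"
    and sub: "subsolution M F (hEZ \<theta> \<epsilon>1 \<nu> \<Lambda>) U1 W1"
    and super: "supersolution M F (hEZ \<theta> \<epsilon>2 \<nu> \<Lambda>) U2 W2"
    and condA: "conditionA M F (hEZ \<theta> \<epsilon>1 \<nu> \<Lambda>) U1 W1 W2"
    and stop: "stopping_time_on M F \<sigma>"
  shows "AE \<omega> in M. W1 (\<sigma> \<omega>) \<omega> \<le> W2 (\<sigma> \<omega>) \<omega>"
proof -
  interpret S: setting M F \<theta> \<nu> \<epsilon>1 \<epsilon>2 \<Lambda> U1 U2 W1 W2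
    by (rule setting.intro[OF filt theta nu Lam LamSO eps U1 U2 U12 sub super condA])
  show ?thesis by (rule S.final[OF stop])
qed

end
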